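(* Let $\mathcal{G}=(V,E)$ be any undirected graph with $|V|=n$, let $d\in V$, and let $\mathcal{P}$ be any local destination-based failover protocol on $\mathcal{G}$. Suppose all-to-one routing towards $d$ is performed. Then, given knowledge of $d$ and $\mathcal{P}$ (but not of the random routing entries), one can construct a set of failed edges $\mathcal{F}\subseteq\{(v,d)~|~v\in V\}$ (edges of $E$ incident to $d$) with $|\mathcal{F}|=O(n/\log n)$ such that, with probability at least $1-n^{-\Omega(1)}$, some node $v\neq d$ has load $\mathcal{L}(v)>\frac{1}{10}\cdot\frac{\log n}{\log\log n}$.
   Context: Local destination-based failover routing: the network is an undirected graph $\mathcal{G}=(V,E)$; $\Gamma(v)$ denotes the set of neighbors of $v$. Given a set $\mathcal{F}\subseteq E$ of failed edges, let $\mathcal{F}_v=\{w~|~(v,w)\in\mathcal{F}\}$. A local destination-based failover protocol $\mathcal{P}$ is a family of probability distributions $\mathcal{D}(v,\mathcal{F}_v,d)$, one for each $v,d\in V$ and $\mathcal{F}_v\subseteq\Gamma(v)$, where $\mathcal{D}(v,\mathcal{F}_v,d)$ is a distribution over $(\Gamma(v)\setminus\mathcal{F}_v)\cup\{v\}$. The failure set $\mathcal{F}$ is fixed first (by an adversary knowing $\mathcal{P}$ and $d$ but not the random choices); then each node $v$ independently draws its routing entry $\alpha(v,\mathcal{F}_v,d)$ from $\mathcal{D}(v,\mathcal{F}_v,d)$, and a packet with destination $d$ at node $v$ is forwarded to $\alpha(v,\mathcal{F}_v,d)$. All-to-one routing towards $d$: every node $v\neq d$ sends one flow towards $d$, which follows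 the forwarding entries. The load $\mathcal{L}(v)$ of a node $v$ is the number of flows that pass through $v$ on their way to $d$ (a flow started at $v$ counts); if some flow enters a forwarding cycle, every node on that cycle has load $\infty$. *)

theory Defs
  imports "HOL-Probability.Probability"
begin

definition undirected_graph :: "nat \<Rightarrow> nat set set \<Rightarrow> bool" where
  "undirected_graph n E \<longleftrightarrow> (\<forall>e\<in>E. \<exists>u w. e = {u, w} \<and> u \<noteq> w \<and> u < n \<and> w < n)"

definition nbrs :: "nat set set \<Rightarrow> nat \<Rightarrow> nat set" where
  "nbrs E v = {w. {v, w} \<in> E}"

definition failed_at :: "nat set set \<Rightarrow> nat \<Rightarrow> nat set" where
  "failed_at F v = {w. {v, w} \<in> F}"

definition failover_protocol :: "nat \<Rightarrow> nat set set \<Rightarrow> (nat \<Rightarrow> nat set \<Rightarrow> nat \<Rightarrow> nat pmf) \<Rightarrow> bool" where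
  "failover_protocol n E D \<longleftrightarrow>
     (\<forall>v<n. \<forall>d<n. \<forall>Fv. Fv \<subseteq> nbrs E v \<longrightarrow> set_pmf (D v Fv d) \<subseteq> (nbrs E v - Fv) \<union> {v})"

text \<open>Joint distribution of the routing entries alpha(v, F_v, d), drawn independently
  for every node v in V = {..<n} (value outside V is irrelevant, fixed to d).\<close>
definition routing_entries :: "nat \<Rightarrow> (nat \<Rightarrow> nat set \<Rightarrow> nat \<Rightarrow> nat pmf) \<Rightarrow> nat set set \<Rightarrow> nat \<Rightarrow> (nat \<Rightarrow> nat) pmf" where
  "routing_entries n D F d = Pi_pmf {..<n} d (\<lambda>v. D v (failed_at F v) d)"

definition flow_visits :: "(nat \<Rightarrow> nat) \<Rightarrow> nat \<Rightarrow> nat \<Rightarrow> nat \<Rightarrow> bool" where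
  "flow_visits \<alpha> d u v \<longleftrightarrow> (\<exists>k. (\<alpha> ^^ k) u = v \<and> (\<forall>j<k. (\<alpha> ^^ j) u \<noteq> d))"

definition on_cycle :: "(nat \<Rightarrow> nat) \<Rightarrow> nat \<Rightarrow> nat \<Rightarrow> bool" where
  "on_cycle \<alpha> d v \<longleftrightarrow> v \<noteq> d \<and> (\<exists>k>0. (\<alpha> ^^ k) v = v \<and> (\<forall>j<k. (\<alpha> ^^ j) v \<noteq> d))"

definition load :: "nat \<Rightarrow> (nat \<Rightarrow> nat) \<Rightarrow> nat \<Rightarrow> nat \<Rightarrow> ereal" where
  "load n \<alpha> d v =
     (if \<exists>u\<in>{..<n} - {d}. flow_visits \<alpha> d u v \<and> on_cycle \<alpha> d v then \<infinity>
      else ereal (real (card {u \<in> {..<n} - {d}. flow_visits \<alpha> d u v})))"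

end

theory Submission
  imports Defs "HOL-Real_Asymp.Real_Asymp"
begin


lemma integrable_bounded_pmf:
  fixes f :: "'a \<Rightarrow> real"
  assumes "\<And>x. \<bar>f x\<bar> \<le> B"
  shows "integrable (measure_pmf M) f"
  by (rule measure_pmf.integrable_const_bound[where B=B]) (use assms in auto)

lemma second_moment_count:
  fixes M :: "'a pmf" and E :: "'i \<Rightarrow> 'a set" and I :: "'i set"
  assumes fin: "finite I"
    and negc: "\<And>i j. i\<in>I \<Longrightarrow> j\<in>I \<Longrightarrow> i\<noteq>j \<Longrightarrow>
        measure_pmf.prob M (E i \<inter> E j) \<le> measure_pmf.prob M (E i) * measure_pmf.prob M (E j)"
    and t: "0 \<le> t" "t < (\<Sum>i\<in>I. measure_pmf.prob M (E i))"
  shows "measure_pmf.prob M {x. real (card {i\<in>I. x \<in> E i}) < t}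
           \<le> (\<Sum>i\<in>I. measure_pmf.prob M (E i)) / ((\<Sum>i\<in>I. measure_pmf.prob M (E i)) - t)^2"
proof -
  define \<mu> where "\<mu> = (\<Sum>i\<in>I. measure_pmf.prob M (E i))"
  define Y where "Y = (\<lambda>x. \<Sum>i\<in>I. indicator (E i) x :: real)"
  have Ycard: "Y x = real (card {i\<in>I. x \<in> E i})" for x
  proof -
    have "{i\<in>I. x \<in> E i} = I \<inter> {i. x \<in> E i}" by auto
    thus ?thesis unfolding Y_def indicator_def using fin by (simp add: sum.If_cases)
  qed
  have Ybd: "\<bar>Y x\<bar> \<le> real (card I)" for x
    unfolding Ycard using fin by (simp add: card_mono)
  have ind_int: "integrable (measure_pmf M) (indicator A :: 'a \<Rightarrow> real)" for A
    by (rule integrable_bounded_pmf[where B=1]) (auto simp: indicator_def)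
  have EY: "measure_pmf.expectation M Y = \<mu>"
    unfolding Y_def \<mu>_def
    by (subst Bochner_Integration.integral_sum) (auto intro: ind_int)
  have Y2: "(Y x)^2 = (\<Sum>i\<in>I. \<Sum>j\<in>I. indicator (E i \<inter> E j) x)" for x
    unfolding Y_def power2_eq_square sum_product
    by (intro sum.cong refl) (auto simp: indicator_def)
  have EY2: "measure_pmf.expectation M (\<lambda>x. (Y x)^2)
      = (\<Sum>i\<in>I. \<Sum>j\<in>I. measure_pmf.prob M (E i \<inter> E j))"
    unfolding Y2
    by (subst Bochner_Integration.integral_sum, force intro!: Bochner_Integration.integrable_sum ind_int)
       (subst Bochner_Integration.integral_sum, auto intro: ind_int)
  have "(\<Sum>i\<in>I. \<Sum>j\<in>I. measure_pmf.prob M (E i \<inter> E j))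
        \<le> (\<Sum>i\<in>I. measure_pmf.prob M (E i) + (\<Sum>j\<in>I. measure_pmf.prob M (E i) * measure_pmf.prob M (E j)))"
  proof (intro sum_mono)
    fix i assume i: "i \<in> I"
    have "(\<Sum>j\<in>I. measure_pmf.prob M (E i \<inter> E j)) =
          measure_pmf.prob M (E i \<inter> E i) + (\<Sum>j\<in>I-{i}. measure_pmf.prob M (E i \<inter> E j))"
      using i fin by (simp add: sum.remove)
    also have "\<dots> \<le> measure_pmf.prob M (E i) + (\<Sum>j\<in>I-{i}. measure_pmf.prob M (E i) * measure_pmf.prob M (E j))"
      using negc i by (intro add_mono sum_mono) auto
    also have "\<dots> \<le> measure_pmf.prob M (E i) + (\<Sum>j\<in>I. measure_pmf.prob M (E i) * measure_pmf.prob M (E j))"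
      using i fin by (intro add_left_mono sum_mono2) auto
    finally show "(\<Sum>j\<in>I. measure_pmf.prob M (E i \<inter> E j)) \<le> \<dots>" .
  qed
  also have "\<dots> = \<mu> + \<mu>^2"
    unfolding \<mu>_def sum.distrib power2_eq_square sum_product by simp
  finally have EY2le: "measure_pmf.expectation M (\<lambda>x. (Y x)^2) \<le> \<mu> + \<mu>^2"
    using EY2 by simp
  have pos: "\<mu> - t > 0" using t unfolding \<mu>_def by simp
  have ptw: "indicator {x. Y x < t} x \<le> (Y x - \<mu>)^2 / (\<mu> - t)^2" for x
  proof (cases "Y x < t")
    case True
    have "\<mu> - t \<le> \<mu> - Y x" using True by simp
    hence "(\<mu> - t)^2 \<le> (\<mu> - Y x)^2" using pos by (intro power_mono) auto
    hence "1 \<le> (Y x - \<mu>)^2 / (\<mu> - t)^2" using pos by (simp add: power2_commute)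
    thus ?thesis using True by simp
  qed simp
  have int2: "integrable (measure_pmf M) (\<lambda>x. (Y x - \<mu>)^2 / (\<mu> - t)^2)"
  proof (rule integrable_bounded_pmf[where B="(real (card I) + \<bar>\<mu>\<bar>)^2 / (\<mu> - t)^2"])
    fix x
    have "\<bar>Y x - \<mu>\<bar> \<le> real (card I) + \<bar>\<mu>\<bar>" using Ybd[of x] by linarith
    hence "(Y x - \<mu>)^2 \<le> (real (card I) + \<bar>\<mu>\<bar>)^2"
      by (metis abs_ge_zero order_trans power2_abs power_mono)
    thus "\<bar>(Y x - \<mu>)^2 / (\<mu> - t)^2\<bar> \<le> (real (card I) + \<bar>\<mu>\<bar>)^2 / (\<mu> - t)^2"
      using pos by (simp add: divide_right_mono)
  qed
  have intY: "integrable (measure_pmf M) Y"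
    by (rule integrable_bounded_pmf) (rule Ybd)
  have intY2: "integrable (measure_pmf M) (\<lambda>x. (Y x)^2)"
  proof (rule integrable_bounded_pmf[where B="real (card I)^2"])
    fix x show "\<bar>(Y x)^2\<bar> \<le> real (card I)^2"
      using Ybd[of x] by (metis abs_ge_zero abs_power2 power2_abs power_mono)
  qed
  have "measure_pmf.prob M {x. Y x < t} = measure_pmf.expectation M (indicator {x. Y x < t})"
    by simp
  also have "\<dots> \<le> measure_pmf.expectation M (\<lambda>x. (Y x - \<mu>)^2 / (\<mu> - t)^2)"
    by (intro integral_mono ind_int int2 ptw)
  also have "measure_pmf.expectation M (\<lambda>x. (Y x - \<mu>)^2 / (\<mu> - t)^2)
       = (measure_pmf.expectation M (\<lambda>x. (Y x)^2) - 2 * \<mu> * measure_pmf.expectation M Y + \<mu>^2) / (\<mu> - t)^2"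
  proof -
    have e: "(\<lambda>x. (Y x - \<mu>)^2 / (\<mu> - t)^2) = (\<lambda>x. ((Y x)^2 - 2 * \<mu> * Y x + \<mu>^2) / (\<mu> - t)^2)"
      by (simp add: power2_diff algebra_simps)
    show ?thesis unfolding e
      using intY intY2 by (simp add: Bochner_Integration.integral_diff Bochner_Integration.integral_add)
  qed
  also have "\<dots> \<le> \<mu> / (\<mu> - t)^2"
    using EY2le EY pos by (intro divide_right_mono) (auto simp: power2_eq_square)
  finally show ?thesis unfolding Ycard \<mu>_def .
qed


lemma prob_Pi_restrict:
  assumes "finite A" "T \<subseteq> A"
    and dep: "\<And>f g. (\<forall>x\<in>T. f x = g x) \<Longrightarrow> f \<in> X \<longleftrightarrow> g \<in> X"
  shows "measure_pmf.prob (Pi_pmf A dflt p) X = measure_pmf.prob (Pi_pmf T dflt p) X"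
proof -
  have "Pi_pmf T dflt p = map_pmf (\<lambda>f x. if x \<in> T then f x else dflt) (Pi_pmf A dflt p)"
    by (rule Pi_pmf_subset[OF assms(1,2)])
  hence "measure_pmf.prob (Pi_pmf T dflt p) X
        = measure_pmf.prob (Pi_pmf A dflt p) ((\<lambda>f x. if x \<in> T then f x else dflt) -` X)"
    by simp
  also have "(\<lambda>f x. if x \<in> T then f x else dflt) -` X = X"
  proof -
    have "\<And>f. (\<lambda>x. if x \<in> T then f x else dflt) \<in> X \<longleftrightarrow> f \<in> X" by (rule dep) auto
    thus ?thesis by auto
  qed
  finally show ?thesis by simp
qed

lemma prob_Pi_rect:
  assumes "finite T"
  shows "measure_pmf.prob (Pi_pmf T dflt p) {f. \<forall>x\<in>T. f x \<in> B x} = (\<Prod>x\<in>T. measure_pmf.prob (p x) (B x))"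
proof -
  have "{f. \<forall>x\<in>T. f x \<in> B x} = Pi T B" by (auto simp: Pi_def)
  thus ?thesis using measure_Pi_pmf_Pi[OF assms] by simp
qed

lemma prob_pair_rect:
  "measure_pmf.prob (pair_pmf M N) (A \<times> B) = measure_pmf.prob M A * measure_pmf.prob N B"
proof -
  have "measure_pmf.prob (pair_pmf M N) (A \<times> B) = measure_pmf.prob (pair_pmf M N) ((A \<times> B) \<inter> set_pmf (pair_pmf M N))"
    using measure_Int_set_pmf[of "pair_pmf M N" "A \<times> B"] by simp
  also have "(A \<times> B) \<inter> set_pmf (pair_pmf M N) = (A \<inter> set_pmf M) \<times> (B \<inter> set_pmf N)"
    by auto
  also have "measure_pmf.prob (pair_pmf M N) \<dots> = measure_pmf.prob M (A \<inter> set_pmf M) * measure_pmf.prob N (B \<inter> set_pmf N)"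
    by (rule measure_pmf_prob_product) auto
  finally show ?thesis using measure_Int_set_pmf[of M A] measure_Int_set_pmf[of N B] by simp
qed

lemma prob_Pi_insert:
  assumes "finite T" "b \<notin> T"
  shows "measure_pmf.prob (Pi_pmf (insert b T) dflt p) X
       = measure_pmf.prob (pair_pmf (p b) (Pi_pmf T dflt p)) {(y,f). f(b:=y) \<in> X}"
proof -
  have "measure_pmf.prob (Pi_pmf (insert b T) dflt p) X =
     measure_pmf.prob (pair_pmf (p b) (Pi_pmf T dflt p)) ((\<lambda>(y,f). f(b:=y)) -` X)"
    by (subst Pi_pmf_insert[OF assms]) simp
  also have "(\<lambda>(y,f). f(b:=y)) -` X = {(y,f). f(b:=y) \<in> X}" by auto
  finally show ?thesis .
qed

definition cnt :: "nat set \<Rightarrow> nat \<Rightarrow> (nat \<Rightarrow> nat) \<Rightarrow> nat" where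
  "cnt T w f = card {a\<in>T. f a = w}"

lemma cnt_insert_upd:
  assumes "finite T" "b \<notin> T"
  shows "cnt (insert b T) w (f(b:=y)) = (if y = w then Suc (cnt T w f) else cnt T w f)"
proof -
  have e: "{a\<in>insert b T. (f(b:=y)) a = w} = (if y = w then insert b {a\<in>T. f a = w} else {a\<in>T. f a = w})"
    using assms by auto
  show ?thesis unfolding cnt_def e using assms by auto
qed

lemma prob_cnt2_insert:
  fixes p :: "nat \<Rightarrow> nat pmf"
  assumes "finite T" "b \<notin> T" "w \<noteq> w'"
  shows "measure_pmf.prob (Pi_pmf (insert b T) dflt p) {f. \<Phi> (cnt (insert b T) w f) (cnt (insert b T) w' f)}
      = pmf (p b) w * measure_pmf.prob (Pi_pmf T dflt p) {f. \<Phi> (Suc (cnt T w f)) (cnt T w' f)}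
      + pmf (p b) w' * measure_pmf.prob (Pi_pmf T dflt p) {f. \<Phi> (cnt T w f) (Suc (cnt T w' f))}
      + (1 - pmf (p b) w - pmf (p b) w') * measure_pmf.prob (Pi_pmf T dflt p) {f. \<Phi> (cnt T w f) (cnt T w' f)}"
proof -
  let ?M = "pair_pmf (p b) (Pi_pmf T dflt p)"
  let ?Q = "Pi_pmf T dflt p"
  define S1 where "S1 = {w} \<times> {f. \<Phi> (Suc (cnt T w f)) (cnt T w' f)}"
  define S2 where "S2 = {w'} \<times> {f. \<Phi> (cnt T w f) (Suc (cnt T w' f))}"
  define S3 where "S3 = (-{w,w'}) \<times> {f. \<Phi> (cnt T w f) (cnt T w' f)}"
  have e: "{(y,f). f(b:=y) \<in> {f. \<Phi> (cnt (insert b T) w f) (cnt (insert b T) w' f)}} = S1 \<union> S2 \<union> S3"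
    unfolding S1_def S2_def S3_def using assms by (auto simp: cnt_insert_upd)
  have "measure_pmf.prob ?M (S1 \<union> S2 \<union> S3) = measure_pmf.prob ?M S1 + measure_pmf.prob ?M S2 + measure_pmf.prob ?M S3"
    unfolding S1_def S2_def S3_def using assms(3)
    by (subst measure_pmf.finite_measure_Union, auto)+
  also have "measure_pmf.prob (p b) (-{w,w'}) = 1 - pmf (p b) w - pmf (p b) w'"
  proof -
    have "measure_pmf.prob (p b) (-{w,w'}) = 1 - measure_pmf.prob (p b) {w,w'}"
      by (simp add: measure_pmf.prob_compl[symmetric] Compl_eq_Diff_UNIV)
    also have "measure_pmf.prob (p b) {w,w'} = pmf (p b) w + pmf (p b) w'"
    proof -
      have "{w,w'} = {w} \<union> {w'}" by auto
      thus ?thesis using assms(3) measure_pmf.finite_measure_Union[of "{w}" "p b" "{w'}"]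
        by (simp add: measure_pmf_single)
    qed
    finally show ?thesis by simp
  qed
  hence "measure_pmf.prob ?M S3 = (1 - pmf (p b) w - pmf (p b) w') * measure_pmf.prob ?Q {f. \<Phi> (cnt T w f) (cnt T w' f)}"
    unfolding S3_def prob_pair_rect by simp
  finally show ?thesis
    unfolding prob_Pi_insert[OF assms(1,2)] e
    by (simp add: S1_def S2_def prob_pair_rect measure_pmf_single)
qed


lemma prob_cnt1_insert:
  fixes p :: "nat \<Rightarrow> nat pmf"
  assumes "finite T" "b \<notin> T"
  shows "measure_pmf.prob (Pi_pmf (insert b T) dflt p) {f. k \<le> cnt (insert b T) w f}
      = pmf (p b) w * measure_pmf.prob (Pi_pmf T dflt p) {f. k - 1 \<le> cnt T w f}
      + (1 - pmf (p b) w) * measure_pmf.prob (Pi_pmf T dflt p) {f. k \<le> cnt T w f}"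
proof -
  have "Suc w \<noteq> w" by simp
  from prob_cnt2_insert[OF assms this[symmetric], of dflt p "\<lambda>a c. k \<le> a"]
  have "measure_pmf.prob (Pi_pmf (insert b T) dflt p) {f. k \<le> cnt (insert b T) w f}
      = pmf (p b) w * measure_pmf.prob (Pi_pmf T dflt p) {f. k \<le> Suc (cnt T w f)}
      + pmf (p b) (Suc w) * measure_pmf.prob (Pi_pmf T dflt p) {f. k \<le> cnt T w f}
      + (1 - pmf (p b) w - pmf (p b) (Suc w)) * measure_pmf.prob (Pi_pmf T dflt p) {f. k \<le> cnt T w f}"
    by simp
  also have "{f. k \<le> Suc (cnt T w f)} = {f. k - 1 \<le> cnt T w f}" by auto
  finally show ?thesis by (simp add: algebra_simps)
qed

lemma pmf_two_le:
  assumes "w \<noteq> w'" shows "pmf M w + pmf M w' \<le> 1"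
proof -
  have "measure_pmf.prob M ({w} \<union> {w'}) = pmf M w + pmf M w'"
    using assms measure_pmf.finite_measure_Union[of "{w}" M "{w'}"] by (simp add: measure_pmf_single)
  thus ?thesis using measure_pmf.prob_le_1[of M "{w} \<union> {w'}"] by simp
qed

lemma negcor_alg:
  fixes x y a0 a1 b0 b1 J1 J2 J3 :: real
  assumes "0 \<le> x" "0 \<le> y" "x + y \<le> 1" "a0 \<le> a1" "b0 \<le> b1" "0 \<le> a0" "0 \<le> b0"
    "J1 \<le> a1 * b0" "J2 \<le> a0 * b1" "J3 \<le> a0 * b0"
  shows "x * J1 + y * J2 + (1 - x - y) * J3 \<le> (x * a1 + (1 - x) * a0) * (y * b1 + (1 - y) * b0)"
proof -
  have "x * J1 + y * J2 + (1 - x - y) * J3 \<le> x * (a1 * b0) + y * (a0 * b1) + (1 - x - y) * (a0 * b0)"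
    using assms by (intro add_mono mult_left_mono) auto
  also have "\<dots> \<le> (x * a1 + (1 - x) * a0) * (y * b1 + (1 - y) * b0)"
  proof -
    have "0 \<le> x * y * ((a1 - a0) * (b1 - b0))" using assms by (intro mult_nonneg_nonneg) auto
    thus ?thesis by (simp add: algebra_simps)
  qed
  finally show ?thesis .
qed

lemma prob_empty_Pi: "measure_pmf.prob (Pi_pmf {} dflt p) {f. P f} = (if P (\<lambda>_. dflt) then 1 else 0)"
  by (simp add: indicator_def)

lemma cnt_empty[simp]: "cnt {} w f = 0" by (simp add: cnt_def)

lemma cnt_negcor:
  fixes p :: "nat \<Rightarrow> nat pmf"
  assumes "finite T" "w \<noteq> w'"
  shows "measure_pmf.prob (Pi_pmf T dflt p) {f. k \<le> cnt T w f \<and> k' \<le> cnt T w' f}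
     \<le> measure_pmf.prob (Pi_pmf T dflt p) {f. k \<le> cnt T w f} * measure_pmf.prob (Pi_pmf T dflt p) {f. k' \<le> cnt T w' f}"
  using assms(1)
proof (induction T arbitrary: k k' rule: finite_induct)
  case empty
  show ?case by (simp add: prob_empty_Pi)
next
  case (insert b T)
  let ?Q = "Pi_pmf T dflt p"
  define x where "x = pmf (p b) w"
  define y where "y = pmf (p b) w'"
  define A where "A = (\<lambda>k. measure_pmf.prob ?Q {f. k \<le> cnt T w f})"
  define B where "B = (\<lambda>k. measure_pmf.prob ?Q {f. k \<le> cnt T w' f})"
  define J where "J = (\<lambda>k k'. measure_pmf.prob ?Q {f. k \<le> cnt T w f \<and> k' \<le> cnt T w' f})"
  have monoA: "A k \<le> A (k - 1)" for k
    unfolding A_def by (intro measure_pmf.finite_measure_mono) auto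
  have monoB: "B k \<le> B (k - 1)" for k
    unfolding B_def by (intro measure_pmf.finite_measure_mono) auto
  have j: "measure_pmf.prob (Pi_pmf (insert b T) dflt p) {f. k \<le> cnt (insert b T) w f \<and> k' \<le> cnt (insert b T) w' f}
       = x * J (k-1) k' + y * J k (k'-1) + (1 - x - y) * J k k'"
  proof -
    have "measure_pmf.prob (Pi_pmf (insert b T) dflt p) {f. k \<le> cnt (insert b T) w f \<and> k' \<le> cnt (insert b T) w' f}
      = x * measure_pmf.prob ?Q {f. k \<le> Suc (cnt T w f) \<and> k' \<le> cnt T w' f}
      + y * measure_pmf.prob ?Q {f. k \<le> cnt T w f \<and> k' \<le> Suc (cnt T w' f)}
      + (1 - x - y) * measure_pmf.prob ?Q {f. k \<le> cnt T w f \<and> k' \<le> cnt T w' f}"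
      unfolding x_def y_def
      using prob_cnt2_insert[OF insert(1,2) assms(2), of dflt p "\<lambda>a c. k \<le> a \<and> k' \<le> c"] by simp
    also have "{f. k \<le> Suc (cnt T w f) \<and> k' \<le> cnt T w' f} = {f. k - 1 \<le> cnt T w f \<and> k' \<le> cnt T w' f}" by auto
    also have "{f. k \<le> cnt T w f \<and> k' \<le> Suc (cnt T w' f)} = {f. k \<le> cnt T w f \<and> k' - 1 \<le> cnt T w' f}" by auto
    finally show ?thesis unfolding J_def .
  qed
  have a: "measure_pmf.prob (Pi_pmf (insert b T) dflt p) {f. k \<le> cnt (insert b T) w f} = x * A (k-1) + (1-x) * A k"
    unfolding x_def A_def by (rule prob_cnt1_insert[OF insert(1,2)])
  have b: "measure_pmf.prob (Pi_pmf (insert b T) dflt p) {f. k' \<le> cnt (insert b T) w' f} = y * B (k'-1) + (1-y) * B k'"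
    unfolding y_def B_def by (rule prob_cnt1_insert[OF insert(1,2)])
  show ?case unfolding j a b
  proof (rule negcor_alg)
    show "0 \<le> x" "0 \<le> y" unfolding x_def y_def by auto
    show "x + y \<le> 1" unfolding x_def y_def by (rule pmf_two_le[OF assms(2)])
    show "A k \<le> A (k-1)" "B k' \<le> B (k'-1)" by (rule monoA, rule monoB)
    show "0 \<le> A k" "0 \<le> B k'" unfolding A_def B_def by auto
    show "J (k-1) k' \<le> A (k-1) * B k'" "J k (k'-1) \<le> A k * B (k'-1)" "J k k' \<le> A k * B k'"
      unfolding J_def A_def B_def by (rule insert.IH)+
  qed
qed

lemma power_diff_le_mult:
  fixes u v :: real
  assumes "0 \<le> u" "u \<le> v"
  shows "v ^ Suc j - u ^ Suc j \<le> real (Suc j) * (v - u) * v ^ j"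
proof (induction j)
  case 0 show ?case by simp
next
  case (Suc j)
  have "v ^ Suc (Suc j) - u ^ Suc (Suc j) = v * (v ^ Suc j - u ^ Suc j) + u ^ Suc j * (v - u)"
    by (simp add: algebra_simps)
  also have "\<dots> \<le> v * (real (Suc j) * (v - u) * v ^ j) + v ^ Suc j * (v - u)"
    using assms Suc by (intro add_mono mult_left_mono mult_right_mono power_mono) auto
  also have "\<dots> = real (Suc (Suc j)) * (v - u) * v ^ Suc j" by (simp add: algebra_simps)
  finally show ?case .
qed


lemma lb_alg:
  fixes x s u u' V Aj Ak :: real
  assumes "0 \<le> x" "x \<le> 1" "0 \<le> s" "0 \<le> 1 - s - x" "0 \<le> u" "u \<le> u'" "u' - u \<le> x"
    "Aj \<ge> V / fact j * (1 - s)" "V \<ge> u' ^ j" "Ak \<ge> u ^ Suc j / fact (Suc j) * (1 - s)"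
  shows "x * Aj + (1 - x) * Ak \<ge> u' ^ Suc j / fact (Suc j) * (1 - (x + s))"
proof -
  define F where "F = (fact j :: real)"
  have F: "F > 0" unfolding F_def by simp
  have fk: "(fact (Suc j) :: real) = real (Suc j) * F" unfolding F_def by simp
  have s1: "0 \<le> 1 - s" using assms by simp
  have "x * Aj \<ge> x * (u' ^ j / F * (1 - s))"
  proof -
    have "V / F * (1 - s) \<ge> u' ^ j / F * (1 - s)"
      using assms s1 F by (intro mult_right_mono divide_right_mono) auto
    thus ?thesis using assms unfolding F_def by (intro mult_left_mono) auto
  qed
  moreover have "(1 - x) * Ak \<ge> (1 - x) * (u ^ Suc j / (real (Suc j) * F) * (1 - s))"
    using assms fk by (intro mult_left_mono) auto
  moreover have key: "u' ^ Suc j * (1 - s - x) \<le> real (Suc j) * x * u' ^ j * (1 - s) + (1 - x) * u ^ Suc j * (1 - s)"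
  proof -
    have d: "u' ^ Suc j \<le> u ^ Suc j + real (Suc j) * x * u' ^ j"
    proof -
      have "u' ^ Suc j - u ^ Suc j \<le> real (Suc j) * (u' - u) * u' ^ j"
        using assms by (intro power_diff_le_mult) auto
      also have "\<dots> \<le> real (Suc j) * x * u' ^ j"
        using assms by (intro mult_right_mono mult_left_mono) auto
      finally show ?thesis by simp
    qed
    have "u' ^ Suc j * (1 - s - x) \<le> (u ^ Suc j + real (Suc j) * x * u' ^ j) * (1 - s - x)"
      using d assms by (intro mult_right_mono) auto
    also have "\<dots> \<le> real (Suc j) * x * u' ^ j * (1 - s) + (1 - x) * u ^ Suc j * (1 - s)"
    proof -
      have "0 \<le> real (Suc j) * x * x * u' ^ j + s * x * u ^ Suc j"
        using assms by (intro add_nonneg_nonneg mult_nonneg_nonneg) auto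
      thus ?thesis by (simp add: algebra_simps)
    qed
    finally show ?thesis .
  qed
  ultimately have "x * Aj + (1 - x) * Ak \<ge> x * (u' ^ j / F * (1 - s)) + (1 - x) * (u ^ Suc j / (real (Suc j) * F) * (1 - s))"
    by linarith
  also have "x * (u' ^ j / F * (1 - s)) + (1 - x) * (u ^ Suc j / (real (Suc j) * F) * (1 - s))
     = (real (Suc j) * x * u' ^ j * (1 - s) + (1 - x) * u ^ Suc j * (1 - s)) / (real (Suc j) * F)"
  proof -
    have e1: "x * (u' ^ j / F * (1 - s)) = real (Suc j) * x * u' ^ j * (1 - s) / (real (Suc j) * F)"
      using F by (simp del: of_nat_Suc)
    have e2: "(1 - x) * (u ^ Suc j / (real (Suc j) * F) * (1 - s)) = (1 - x) * u ^ Suc j * (1 - s) / (real (Suc j) * F)"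
      by simp
    show ?thesis unfolding e1 e2 by (simp add: add_divide_distrib)
  qed
  also have "\<dots> \<ge> u' ^ Suc j * (1 - s - x) / (real (Suc j) * F)"
    using key F by (intro divide_right_mono) auto
  finally show ?thesis unfolding fk by (simp add: algebra_simps)
qed

lemma cnt_LB:
  fixes p :: "nat \<Rightarrow> nat pmf"
  assumes "finite T" "0 \<le> \<tau>" "\<forall>a\<in>T. pmf (p a) w \<le> \<tau>"
  shows "measure_pmf.prob (Pi_pmf T dflt p) {f. k \<le> cnt T w f}
     \<ge> (max 0 ((\<Sum>a\<in>T. pmf (p a) w) - real k * \<tau>)) ^ k / fact k * (1 - (\<Sum>a\<in>T. pmf (p a) w))"
  using assms(1,3)
proof (induction T arbitrary: k rule: finite_induct)
  case empty
  show ?case using assms(2) by (cases k) (auto simp: prob_empty_Pi max_def)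
next
  case (insert b T)
  let ?Q = "Pi_pmf T dflt p"
  define x where "x = pmf (p b) w"
  define s where "s = (\<Sum>a\<in>T. pmf (p a) w)"
  have sI: "(\<Sum>a\<in>insert b T. pmf (p a) w) = x + s" unfolding x_def s_def using insert by simp
  have x: "0 \<le> x" "x \<le> \<tau>" "x \<le> 1" using insert(4) unfolding x_def by (auto simp: pmf_le_1)
  have s0: "0 \<le> s" unfolding s_def by (intro sum_nonneg) auto
  have IH: "\<And>k. measure_pmf.prob ?Q {f. k \<le> cnt T w f} \<ge> (max 0 (s - real k * \<tau>)) ^ k / fact k * (1 - s)"
    unfolding s_def using insert by auto
  have rec: "measure_pmf.prob (Pi_pmf (insert b T) dflt p) {f. k \<le> cnt (insert b T) w f}
      = x * measure_pmf.prob ?Q {f. k - 1 \<le> cnt T w f} + (1 - x) * measure_pmf.prob ?Q {f. k \<le> cnt T w f}"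
    unfolding x_def by (rule prob_cnt1_insert[OF insert(1,2)])
  have "x * measure_pmf.prob ?Q {f. k - 1 \<le> cnt T w f} + (1 - x) * measure_pmf.prob ?Q {f. k \<le> cnt T w f}
     \<ge> (max 0 (x + s - real k * \<tau>)) ^ k / fact k * (1 - (x + s))"
  proof (cases k)
    case 0
    have "{f. 0 \<le> cnt T w f} = UNIV" by auto
    thus ?thesis using 0 x s0 sI by simp
  next
    case (Suc j)
    show ?thesis
    proof (cases "0 \<le> 1 - s - x")
      case False
      have "0 \<le> x * measure_pmf.prob ?Q {f. k - 1 \<le> cnt T w f} + (1 - x) * measure_pmf.prob ?Q {f. k \<le> cnt T w f}"
        using x by (intro add_nonneg_nonneg mult_nonneg_nonneg) auto
      moreover have "(max 0 (x + s - real k * \<tau>)) ^ k / fact k * (1 - (x + s)) \<le> 0"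
        using False by (intro mult_nonpos_nonneg[THEN order_trans[OF _ order_refl]] mult_nonneg_nonpos) auto
      ultimately show ?thesis by linarith
    next
      case True
      show ?thesis unfolding Suc
      proof (rule lb_alg[where V = "(max 0 (s - real j * \<tau>)) ^ j" and u = "max 0 (s - real (Suc j) * \<tau>)"])
        show "0 \<le> x" "x \<le> 1" "0 \<le> s" "0 \<le> 1 - s - x" using x s0 True by auto
        show "0 \<le> max 0 (s - real (Suc j) * \<tau>)" by simp
        show "max 0 (s - real (Suc j) * \<tau>) \<le> max 0 (x + s - real (Suc j) * \<tau>)" using x by auto
        show "max 0 (x + s - real (Suc j) * \<tau>) - max 0 (s - real (Suc j) * \<tau>) \<le> x" using x by auto
        show "(max 0 (s - real j * \<tau>)) ^ j / fact j * (1 - s) \<le> measure_pmf.prob ?Q {f. Suc j - 1 \<le> cnt T w f}"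
          using IH[of j] by simp
        show "(max 0 (x + s - real (Suc j) * \<tau>)) ^ j \<le> (max 0 (s - real j * \<tau>)) ^ j"
          using x by (intro power_mono) (auto simp: algebra_simps)
        show "(max 0 (s - real (Suc j) * \<tau>)) ^ Suc j / fact (Suc j) * (1 - s) \<le> measure_pmf.prob ?Q {f. Suc j \<le> cnt T w f}"
          using IH[of "Suc j"] by simp
      qed
    qed
  qed
  thus ?case unfolding sI rec .
qed

lemma cnt_mono_prob:
  fixes p :: "nat \<Rightarrow> nat pmf"
  assumes "finite P" "T \<subseteq> P"
  shows "measure_pmf.prob (Pi_pmf T dflt p) {f. k \<le> cnt T w f} \<le> measure_pmf.prob (Pi_pmf P dflt p) {f. k \<le> cnt P w f}"
proof -
  have "measure_pmf.prob (Pi_pmf T dflt p) {f. k \<le> cnt T w f} = measure_pmf.prob (Pi_pmf P dflt p) {f. k \<le> cnt T w f}"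
  proof (rule prob_Pi_restrict[symmetric, OF assms])
    fix f g :: "nat \<Rightarrow> nat" assume "\<forall>x\<in>T. f x = g x"
    hence "{a\<in>T. f a = w} = {a\<in>T. g a = w}" by auto
    thus "f \<in> {f. k \<le> cnt T w f} \<longleftrightarrow> g \<in> {f. k \<le> cnt T w f}" by (simp add: cnt_def)
  qed
  also have "\<dots> \<le> measure_pmf.prob (Pi_pmf P dflt p) {f. k \<le> cnt P w f}"
  proof (intro measure_pmf.finite_measure_mono subsetI, simp)
    fix f assume "k \<le> cnt T w f"
    moreover have "cnt T w f \<le> cnt P w f" unfolding cnt_def using assms by (intro card_mono) auto
    ultimately show "k \<le> cnt P w f" by simp
  qed auto
  finally show ?thesis .
qed


lemma prob_Pi_rect_sub:
  assumes "finite P" "T \<subseteq> P"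
  shows "measure_pmf.prob (Pi_pmf P dflt p) {f. \<forall>x\<in>T. f x \<in> B x} = (\<Prod>x\<in>T. measure_pmf.prob (p x) (B x))"
proof -
  define B' where "B' = (\<lambda>x. if x \<in> T then B x else UNIV)"
  have "{f. \<forall>x\<in>T. f x \<in> B x} = {f. \<forall>x\<in>P. f x \<in> B' x}" using assms unfolding B'_def by auto
  hence "measure_pmf.prob (Pi_pmf P dflt p) {f. \<forall>x\<in>T. f x \<in> B x} = (\<Prod>x\<in>P. measure_pmf.prob (p x) (B' x))"
    using prob_Pi_rect[OF assms(1)] by simp
  also have "\<dots> = (\<Prod>x\<in>T. measure_pmf.prob (p x) (B' x))"
    using assms by (intro prod.mono_neutral_right) (auto simp: B'_def)
  also have "\<dots> = (\<Prod>x\<in>T. measure_pmf.prob (p x) (B x))" by (simp add: B'_def)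
  finally show ?thesis .
qed

lemma funpow_lt:
  assumes "\<forall>v<n. \<alpha> v < n" "u < n" shows "(\<alpha> ^^ j) u < n"
  using assms by (induction j) auto

lemma inf_load:
  assumes H: "\<forall>v<n. \<alpha> v < n" and u: "u < n" "u \<noteq> d" and nd: "\<forall>j. (\<alpha> ^^ j) u \<noteq> d"
  shows "\<exists>v\<in>{..<n}-{d}. load n \<alpha> d v = \<infinity>"
proof -
  have "\<not> inj_on (\<lambda>j. (\<alpha> ^^ j) u) {..n}"
  proof
    assume "inj_on (\<lambda>j. (\<alpha> ^^ j) u) {..n}"
    moreover have "(\<lambda>j. (\<alpha> ^^ j) u) ` {..n} \<subseteq> {..<n}" using funpow_lt[OF H u(1)] by auto
    ultimately have "card {..n} \<le> card {..<n::nat}" by (intro card_inj_on_le) auto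
    thus False by simp
  qed
  then obtain i j where ij: "i \<le> n" "j \<le> n" "i \<noteq> j" "(\<alpha> ^^ i) u = (\<alpha> ^^ j) u"
    unfolding inj_on_def by auto
  then obtain a b where ab: "a < b" "(\<alpha> ^^ a) u = (\<alpha> ^^ b) u"
    by (metis linorder_neq_iff)
  define v where "v = (\<alpha> ^^ a) u"
  have per: "(\<alpha> ^^ (b - a)) v = v"
  proof -
    have "(\<alpha> ^^ (b - a)) v = (\<alpha> ^^ ((b - a) + a)) u" unfolding v_def funpow_add by simp
    also have "(b - a) + a = b" using ab by simp
    finally show ?thesis using ab unfolding v_def by simp
  qed
  have cyc: "on_cycle \<alpha> d v"
    unfolding on_cycle_def
  proof (intro conjI exI[of _ "b - a"])
    show "v \<noteq> d" using nd unfolding v_def by auto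
    show "0 < b - a" using ab by simp
    show "(\<alpha> ^^ (b - a)) v = v" by (rule per)
    show "\<forall>j<b - a. (\<alpha> ^^ j) v \<noteq> d"
      using nd unfolding v_def by (metis comp_apply funpow_add)
  qed
  have fv: "flow_visits \<alpha> d u v" unfolding flow_visits_def v_def using nd by auto
  have vU: "v \<in> {..<n}-{d}" using funpow_lt[OF H u(1)] nd unfolding v_def by auto
  have "load n \<alpha> d v = \<infinity>" unfolding load_def using fv cyc u by auto
  thus ?thesis using vU by auto
qed

lemma load_ge:
  assumes "k \<le> card {u\<in>{..<n}-{d}. flow_visits \<alpha> d u w}"
  shows "ereal (real k) \<le> load n \<alpha> d w"
  using assms unfolding load_def by auto

lemma flow_visits_self: "flow_visits \<alpha> d w w"
  unfolding flow_visits_def by (intro exI[of _ 0]) auto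

lemma spread_load:
  assumes "P \<subseteq> {..<n}-{d}" "finite P" "k \<le> cnt P w \<alpha>"
  shows "ereal (real k) \<le> load n \<alpha> d w"
proof (rule load_ge)
  have "{a\<in>P. \<alpha> a = w} \<subseteq> {u\<in>{..<n}-{d}. flow_visits \<alpha> d u w}"
  proof
    fix a assume a: "a \<in> {a\<in>P. \<alpha> a = w}"
    have "flow_visits \<alpha> d a w" unfolding flow_visits_def
      using a assms(1) by (intro exI[of _ 1]) auto
    thus "a \<in> {u\<in>{..<n}-{d}. flow_visits \<alpha> d u w}" using a assms(1) by auto
  qed
  hence "cnt P w \<alpha> \<le> card {u\<in>{..<n}-{d}. flow_visits \<alpha> d u w}"
    unfolding cnt_def by (intro card_mono) auto
  thus "k \<le> card {u\<in>{..<n}-{d}. flow_visits \<alpha> d u w}" using assms(3) by simp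
qed

lemma piece_load:
  assumes H: "\<forall>v<n. \<alpha> v < n" and T: "T \<subseteq> {..<n}-{d}" "T \<noteq> {}" "finite T"
    and r: "r \<in> {..<n}-{d}" "r \<notin> T" and step: "\<forall>v\<in>T. \<alpha> v \<in> insert r T"
    and big: "k \<le> card T \<or> (\<forall>v\<in>T. \<alpha> v \<in> T)"
  shows "\<exists>v\<in>{..<n}-{d}. ereal (real k) \<le> load n \<alpha> d v"
proof (cases "\<exists>u\<in>T. \<forall>j. (\<alpha> ^^ j) u \<in> T")
  case True
  then obtain u where u: "u \<in> T" "\<forall>j. (\<alpha> ^^ j) u \<in> T" by auto
  have "\<forall>j. (\<alpha> ^^ j) u \<noteq> d" using u T by auto
  from inf_load[OF H _ _ this] u T obtain v where "v\<in>{..<n}-{d}" "load n \<alpha> d v = \<infinity>" by auto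
  thus ?thesis by (intro bexI[of _ v]) auto
next
  case False
  have reach: "flow_visits \<alpha> d u r" if u: "u \<in> T" for u
  proof -
    from False u obtain j where "(\<alpha> ^^ j) u \<notin> T" by auto
    define j0 where "j0 = (LEAST j. (\<alpha> ^^ j) u \<notin> T)"
    have j0: "(\<alpha> ^^ j0) u \<notin> T" unfolding j0_def by (rule LeastI) fact
    have before: "\<forall>i<j0. (\<alpha> ^^ i) u \<in> T" unfolding j0_def using not_less_Least by blast
    have "j0 \<noteq> 0" using j0 u by (intro notI) simp
    then obtain i where i: "j0 = Suc i" by (cases j0) auto
    have "(\<alpha> ^^ i) u \<in> T" using before i by simp
    hence "(\<alpha> ^^ j0) u \<in> insert r T" using step i by simp
    hence "(\<alpha> ^^ j0) u = r" using j0 by simp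
    moreover have "\<forall>i<j0. (\<alpha> ^^ i) u \<noteq> d" using before T by auto
    ultimately show ?thesis unfolding flow_visits_def by auto
  qed
  have notclosed: "\<not> (\<forall>v\<in>T. \<alpha> v \<in> T)"
  proof
    assume cl: "\<forall>v\<in>T. \<alpha> v \<in> T"
    obtain u where "u \<in> T" using T by auto
    moreover have "\<forall>j. (\<alpha> ^^ j) u \<in> T" if "u \<in> T" for u
    proof
      fix j show "(\<alpha> ^^ j) u \<in> T" using that cl by (induction j) auto
    qed
    ultimately show False using False by auto
  qed
  have "insert r T \<subseteq> {u\<in>{..<n}-{d}. flow_visits \<alpha> d u r}"
    using reach T r flow_visits_self by auto
  hence "card (insert r T) \<le> card {u\<in>{..<n}-{d}. flow_visits \<alpha> d u r}"
    by (intro card_mono) auto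
  moreover have "k \<le> card T" using big notclosed by auto
  ultimately have "k \<le> card {u\<in>{..<n}-{d}. flow_visits \<alpha> d u r}"
    using T r by simp
  thus ?thesis using r load_ge by blast
qed


lemma trim_subset:
  fixes x :: "nat \<Rightarrow> real"
  assumes "finite P" "\<forall>a\<in>P. 0 \<le> x a \<and> x a \<le> \<tau>" "0 \<le> \<tau>" "0 \<le> \<theta>" "\<theta> \<le> (\<Sum>a\<in>P. x a)"
  shows "\<exists>T\<subseteq>P. \<theta> - \<tau> \<le> (\<Sum>a\<in>T. x a) \<and> (\<Sum>a\<in>T. x a) \<le> \<theta>"
  using assms(1,2,5)
proof (induction P rule: finite_induct)
  case empty thus ?case using assms(3,4) by auto
next
  case (insert b P)
  show ?case
  proof (cases "\<theta> \<le> (\<Sum>a\<in>P. x a)")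
    case True
    with insert obtain T where "T \<subseteq> P" "\<theta> - \<tau> \<le> (\<Sum>a\<in>T. x a) \<and> (\<Sum>a\<in>T. x a) \<le> \<theta>" by auto
    thus ?thesis by (intro exI[of _ T]) auto
  next
    case False
    have "x b \<le> \<tau>" using insert by auto
    moreover have "\<theta> \<le> x b + (\<Sum>a\<in>P. x a)" using insert by simp
    ultimately show ?thesis using False by (intro exI[of _ P]) auto
  qed
qed

lemma choose_blocks:
  fixes Bl :: "'i \<Rightarrow> 'a set"
  assumes "finite C" "\<forall>c\<in>C. finite (Bl c) \<and> card (Bl c) \<le> k" "k \<le> card (\<Union>c\<in>C. Bl c)" "1 \<le> k"
  shows "\<exists>C'\<subseteq>C. k \<le> card (\<Union>c\<in>C'. Bl c) \<and> card (\<Union>c\<in>C'. Bl c) \<le> 2*k - 1"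
  using assms(1,2,3)
proof (induction C rule: finite_induct)
  case empty thus ?case using assms(4) by simp
next
  case (insert c C)
  show ?case
  proof (cases "k \<le> card (\<Union>c\<in>C. Bl c)")
    case True
    with insert obtain C' where "C' \<subseteq> C" "k \<le> card (\<Union>c\<in>C'. Bl c) \<and> card (\<Union>c\<in>C'. Bl c) \<le> 2*k - 1" by auto
    thus ?thesis by (intro exI[of _ C']) auto
  next
    case False
    have "card (\<Union>c\<in>insert c C. Bl c) \<le> card (Bl c) + card (\<Union>c\<in>C. Bl c)"
      by (simp add: card_Un_le)
    also have "\<dots> \<le> k + (k - 1)" using insert False by (intro add_mono) auto
    finally show ?thesis using insert.prems(2) assms(4) by (intro exI[of _ "insert c C"]) auto
  qed
qed

definition acyc :: "(nat \<Rightarrow> nat) \<Rightarrow> nat set \<Rightarrow> bool" where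
  "acyc h H \<longleftrightarrow> (\<forall>y\<in>H. \<exists>i. (h ^^ i) y \<notin> H)"

definition reach :: "(nat \<Rightarrow> nat) \<Rightarrow> nat set \<Rightarrow> nat \<Rightarrow> nat \<Rightarrow> bool" where
  "reach h H y x \<longleftrightarrow> (\<exists>j. (h ^^ j) y = x \<and> (\<forall>i<j. (h ^^ i) y \<in> H))"

definition Anc :: "(nat \<Rightarrow> nat) \<Rightarrow> nat set \<Rightarrow> nat \<Rightarrow> nat set" where
  "Anc h H x = {y\<in>H. y \<noteq> x \<and> reach h H y x}"

lemma funpow_mult_fix:
  assumes "(h ^^ p) x = x" shows "(h ^^ (q * p)) x = x"
  using assms by (induction q) (simp_all add: funpow_add)

lemma funpow_mod_fix:
  assumes "(h ^^ p) x = x" shows "(h ^^ i) x = (h ^^ (i mod p)) x"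
proof -
  have "(h ^^ i) x = (h ^^ (i mod p + (i div p) * p)) x" by simp
  also have "\<dots> = (h ^^ (i mod p)) ((h ^^ ((i div p) * p)) x)" by (simp only: funpow_add comp_apply)
  also have "\<dots> = (h ^^ (i mod p)) x" using funpow_mult_fix[OF assms] by simp
  finally show ?thesis .
qed

lemma acyc_no_cycle:
  assumes "acyc h H" "x \<in> H" "(h ^^ p) x = x" "0 < p" "\<forall>i<p. (h ^^ i) x \<in> H"
  shows False
proof -
  have "(h ^^ i) x \<in> H" for i
    using funpow_mod_fix[OF assms(3), of i] assms(4,5) by simp
  thus False using assms(1,2) unfolding acyc_def by auto
qed

lemma reach_trans:
  assumes "reach h H y z" "reach h H z x" "z \<in> H \<or> z = x"
  shows "reach h H y x"
proof -
  from assms(1) obtain j1 where j1: "(h ^^ j1) y = z" "\<forall>i<j1. (h ^^ i) y \<in> H" unfolding reach_def by auto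
  from assms(2) obtain j2 where j2: "(h ^^ j2) z = x" "\<forall>i<j2. (h ^^ i) z \<in> H" unfolding reach_def by auto
  have "(h ^^ (j2 + j1)) y = x" using j1 j2 by (simp add: funpow_add)
  moreover have "\<forall>i<j2 + j1. (h ^^ i) y \<in> H"
  proof (intro allI impI)
    fix i assume i: "i < j2 + j1"
    show "(h ^^ i) y \<in> H"
    proof (cases "i < j1")
      case True thus ?thesis using j1 by auto
    next
      case False
      define t where "t = i - j1"
      have t: "i = t + j1" "t < j2" using False i unfolding t_def by auto
      have "(h ^^ i) y = (h ^^ t) z" using t j1 by (simp add: funpow_add)
      thus ?thesis using j2 t by auto
    qed
  qed
  ultimately show ?thesis unfolding reach_def by auto
qed

lemma reach_step:
  assumes "y \<in> H" "reach h H (h y) x" shows "reach h H y x"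
proof -
  from assms(2) obtain j where j: "(h ^^ j) (h y) = x" "\<forall>i<j. (h ^^ i) (h y) \<in> H" unfolding reach_def by auto
  have "(h ^^ Suc j) y = x" using j by (simp add: funpow_swap1)
  moreover have "\<forall>i<Suc j. (h ^^ i) y \<in> H"
  proof (intro allI impI)
    fix i assume "i < Suc j"
    thus "(h ^^ i) y \<in> H" using j assms(1) by (cases i) (auto simp: funpow_swap1)
  qed
  ultimately show ?thesis unfolding reach_def by blast
qed

lemma acyc_reach_self:
  assumes "acyc h H" "y \<in> H" "reach h H (h y) y"
  shows False
proof -
  from assms(3) obtain j where j: "(h ^^ j) (h y) = y" "\<forall>i<j. (h ^^ i) (h y) \<in> H" unfolding reach_def by auto
  have "(h ^^ Suc j) y = y" using j by (simp add: funpow_swap1)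
  moreover have "\<forall>i<Suc j. (h ^^ i) y \<in> H"
  proof (intro allI impI)
    fix i assume "i < Suc j"
    thus "(h ^^ i) y \<in> H" using j assms(2) by (cases i) (auto simp: funpow_swap1)
  qed
  ultimately show False using acyc_no_cycle[OF assms(1,2)] by blast
qed


definition good_piece :: "(nat \<Rightarrow> nat) \<Rightarrow> nat \<Rightarrow> nat set \<Rightarrow> bool" where
  "good_piece h k T \<longleftrightarrow> finite T \<and> T \<noteq> {} \<and> card T \<le> 2*k \<and>
     (\<exists>r. r \<notin> T \<and> h ` T \<subseteq> insert r T) \<and> (k \<le> card T \<or> h ` T \<subseteq> T)"

lemma tree_pieces:
  assumes "1 \<le> k" "finite H" "acyc h H"
  shows "\<exists>\<T>. \<T> \<subseteq> Pow H \<and> (\<forall>T1\<in>\<T>. \<forall>T2\<in>\<T>. T1 \<noteq> T2 \<longrightarrow> T1 \<inter> T2 = {}) \<and>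
            (\<forall>T\<in>\<T>. good_piece h k T) \<and>
            card H \<le> (2*k - 1) * card \<T> + (k - 1) * card (h ` H - H)"
  using assms(2,3)
proof (induction "card H" arbitrary: H rule: less_induct)
  case less
  note fin = less.prems(1) and ac = less.prems(2)
  show ?case
  proof (cases "\<exists>x. k \<le> card (Anc h H x)")
    case False
    have sub: "H \<subseteq> (\<Union>e\<in>h ` H - H. Anc h H e)"
    proof
      fix y assume y: "y \<in> H"
      then obtain i where "(h ^^ i) y \<notin> H" using ac unfolding acyc_def by auto
      define i0 where "i0 = (LEAST i. (h ^^ i) y \<notin> H)"
      have i0: "(h ^^ i0) y \<notin> H" unfolding i0_def by (rule LeastI) fact
      have bef: "\<forall>i<i0. (h ^^ i) y \<in> H" unfolding i0_def using not_less_Least by blast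
      have "i0 \<noteq> 0" using i0 y by (intro notI) simp
      then obtain j where j: "i0 = Suc j" by (cases i0) auto
      have "(h ^^ j) y \<in> H" using bef j by simp
      hence e: "(h ^^ i0) y \<in> h ` H - H" using i0 j by auto
      have "y \<in> Anc h H ((h ^^ i0) y)"
        unfolding Anc_def reach_def using y i0 bef by auto
      thus "y \<in> (\<Union>e\<in>h ` H - H. Anc h H e)" using e by auto
    qed
    have "card H \<le> card (\<Union>e\<in>h ` H - H. Anc h H e)"
      using fin by (intro card_mono[OF _ sub]) (auto simp: Anc_def)
    also have "\<dots> \<le> (\<Sum>e\<in>h ` H - H. card (Anc h H e))" by (rule card_UN_le) (use fin in auto)
    also have "\<dots> \<le> (\<Sum>e\<in>h ` H - H. k - 1)"
    proof (intro sum_mono)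
      fix e have "card (Anc h H e) < k" using False by (simp add: not_le)
      thus "card (Anc h H e) \<le> k - 1" by linarith
    qed
    also have "\<dots> = (k - 1) * card (h ` H - H)" by simp
    finally show ?thesis by (intro exI[of _ "{}"]) auto
  next
    case True
    then obtain x0 where "k \<le> card (Anc h H x0)" by auto
    from ex_has_least_nat[where P="\<lambda>x. k \<le> card (Anc h H x)" and m="\<lambda>x. card (Anc h H x)", OF this]
    obtain x where kx: "k \<le> card (Anc h H x)" and minx: "\<And>x'. k \<le> card (Anc h H x') \<Longrightarrow> card (Anc h H x) \<le> card (Anc h H x')"
      by blast
    define Ch where "Ch = {c\<in>H. h c = x \<and> c \<noteq> x}"
    define Bl where "Bl = (\<lambda>c. insert c (Anc h H c))"
    have finAnc: "finite (Anc h H z)" for z using fin by (auto simp: Anc_def)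
    have xnotAnc: "x \<notin> Anc h H c" if c: "c \<in> Ch" for c
    proof
      assume "x \<in> Anc h H c"
      hence xH: "x \<in> H" and r: "reach h H x c" unfolding Anc_def by auto
      have "reach h H c x" unfolding reach_def using c unfolding Ch_def by (intro exI[of _ 1]) auto
      hence "reach h H x x" using reach_trans[OF r] c unfolding Ch_def by auto
      have "reach h H (h c) c" using r c unfolding Ch_def by simp
      thus False using acyc_reach_self[OF ac] c unfolding Ch_def by auto
    qed
    have AncSub: "Anc h H c \<subseteq> Anc h H x" if c: "c \<in> Ch" for c
    proof
      fix y assume y: "y \<in> Anc h H c"
      have "reach h H c x" unfolding reach_def using c unfolding Ch_def by (intro exI[of _ 1]) auto
      hence "reach h H y x" using reach_trans[of h H y c x] y c unfolding Anc_def Ch_def by auto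
      moreover have "y \<noteq> x" using y xnotAnc[OF c] by auto
      ultimately show "y \<in> Anc h H x" using y unfolding Anc_def by auto
    qed
    have cAnc: "c \<in> Anc h H x" if c: "c \<in> Ch" for c
      using c unfolding Anc_def Ch_def reach_def by (auto intro!: exI[of _ 1])
    have cnot: "c \<notin> Anc h H c" for c unfolding Anc_def by auto
    have blk: "finite (Bl c) \<and> card (Bl c) \<le> k" if c: "c \<in> Ch" for c
    proof -
      have "Anc h H c \<subset> Anc h H x" using AncSub[OF c] cAnc[OF c] cnot[of c] by auto
      hence "card (Anc h H c) < card (Anc h H x)" using finAnc by (intro psubset_card_mono) auto
      hence "card (Anc h H c) < k" using minx[of c] by linarith
      thus ?thesis unfolding Bl_def using finAnc[of c] by (simp add: card_insert_if)
    qed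
    have union: "Anc h H x \<subseteq> (\<Union>c\<in>Ch. Bl c)"
    proof
      fix y assume y: "y \<in> Anc h H x"
      then obtain j where j: "(h ^^ j) y = x" "\<forall>i<j. (h ^^ i) y \<in> H" and yH: "y \<in> H" and yx: "y \<noteq> x"
        unfolding Anc_def reach_def by auto
      define j0 where "j0 = (LEAST j. (h ^^ j) y = x)"
      have j0: "(h ^^ j0) y = x" unfolding j0_def by (rule LeastI) fact
      have j0le: "j0 \<le> j" unfolding j0_def by (rule Least_le) fact
      have j0min: "\<forall>i<j0. (h ^^ i) y \<noteq> x" unfolding j0_def using not_less_Least by blast
      have "j0 \<noteq> 0" using j0 yx by (intro notI) simp
      then obtain i where i: "j0 = Suc i" by (cases j0) auto
      define c where "c = (h ^^ i) y"
      have cCh: "c \<in> Ch" unfolding Ch_def c_def using j i j0le j0 j0min by (auto simp: funpow_swap1)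
      have "y \<in> Bl c"
      proof (cases "y = c")
        case True thus ?thesis unfolding Bl_def by simp
      next
        case False
        have "reach h H y c" unfolding reach_def c_def using j i j0le by auto
        thus ?thesis using False yH unfolding Bl_def Anc_def by auto
      qed
      thus "y \<in> (\<Union>c\<in>Ch. Bl c)" using cCh by auto
    qed
    have finCh: "finite Ch" using fin unfolding Ch_def by auto
    have finU: "finite (\<Union>c\<in>Ch. Bl c)" using finCh blk by auto
    have "k \<le> card (\<Union>c\<in>Ch. Bl c)"
      using kx card_mono[OF finU union] by linarith
    from choose_blocks[OF finCh _ this assms(1)] blk
    obtain C' where C': "C' \<subseteq> Ch" "k \<le> card (\<Union>c\<in>C'. Bl c)" "card (\<Union>c\<in>C'. Bl c) \<le> 2*k - 1" by blast
    define T where "T = (\<Union>c\<in>C'. Bl c)"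
    have finT: "finite T" unfolding T_def using C' finCh blk by (auto intro: finite_subset)
    have TH: "T \<subseteq> H" unfolding T_def Bl_def Anc_def using C' unfolding Ch_def by auto
    have xT: "x \<notin> T" unfolding T_def Bl_def using C' xnotAnc unfolding Ch_def by auto
    have hT: "h ` T \<subseteq> insert x T"
    proof
      fix z assume "z \<in> h ` T"
      then obtain y c where yc: "c \<in> C'" "y \<in> Bl c" "z = h y" unfolding T_def by auto
      have cCh: "c \<in> Ch" using yc C' by auto
      show "z \<in> insert x T"
      proof (cases "y = c")
        case True thus ?thesis using yc cCh unfolding Ch_def by auto
      next
        case False
        hence yA: "y \<in> Anc h H c" using yc unfolding Bl_def by auto
        then obtain j where j: "(h ^^ j) y = c" "\<forall>i<j. (h ^^ i) y \<in> H" unfolding Anc_def reach_def by auto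
        have "j \<noteq> 0" using j False by (intro notI) simp
        then obtain j' where j': "j = Suc j'" by (cases j) auto
        have "reach h H (h y) c" unfolding reach_def using j j' by (auto simp: funpow_swap1 intro!: exI[of _ j'])
        hence "h y \<in> Bl c"
        proof (cases "h y = c")
          case False
          have "h y \<in> H"
          proof (cases j')
            case 0 thus ?thesis using j j' False by simp
          next
            case (Suc j'')
            thus ?thesis using j(2)[rule_format, of 1] j' by simp
          qed
          thus ?thesis using False \<open>reach h H (h y) c\<close> unfolding Bl_def Anc_def by auto
        qed (simp add: Bl_def)
        thus ?thesis using yc unfolding T_def by auto
      qed
    qed
    have preT: "y \<in> T" if y: "y \<in> H" "h y \<in> T" for y
    proof -
      from y obtain c where c: "c \<in> C'" "h y \<in> Bl c" unfolding T_def by auto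
      have cCh: "c \<in> Ch" using c C' by auto
      have r: "reach h H (h y) c"
      proof (cases "h y = c")
        case True thus ?thesis unfolding reach_def by (intro exI[of _ 0]) auto
      next
        case False thus ?thesis using c unfolding Bl_def Anc_def by auto
      qed
      have ry: "reach h H y c" by (rule reach_step[OF y(1) r])
      have "y \<noteq> c"
      proof
        assume "y = c"
        thus False using acyc_reach_self[OF ac y(1)] r by simp
      qed
      hence "y \<in> Bl c" using ry y unfolding Bl_def Anc_def by auto
      thus ?thesis using c unfolding T_def by auto
    qed
    define H1 where "H1 = H - T"
    have Tne: "T \<noteq> {}"
    proof
      assume "T = {}"
      hence "card T = 0" by simp
      thus False using C'(2) assms(1) unfolding T_def by simp
    qed
    have lt: "card H1 < card H" unfolding H1_def using Tne TH fin
      by (intro psubset_card_mono) auto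
    have fin1: "finite H1" using fin unfolding H1_def by auto
    have ac1: "acyc h H1" unfolding acyc_def
    proof
      fix y assume "y \<in> H1"
      hence "y \<in> H" unfolding H1_def by auto
      then obtain i where "(h ^^ i) y \<notin> H" using ac unfolding acyc_def by auto
      thus "\<exists>i. (h ^^ i) y \<notin> H1" unfolding H1_def by auto
    qed
    have "\<exists>\<T>. \<T> \<subseteq> Pow H1 \<and> (\<forall>T1\<in>\<T>. \<forall>T2\<in>\<T>. T1 \<noteq> T2 \<longrightarrow> T1 \<inter> T2 = {}) \<and>
            (\<forall>T\<in>\<T>. good_piece h k T) \<and>
            card H1 \<le> (2*k - 1) * card \<T> + (k - 1) * card (h ` H1 - H1)"
      by (rule less.hyps[OF lt fin1 ac1])
    then obtain \<T>1 where T1all: "\<T>1 \<subseteq> Pow H1 \<and> (\<forall>T1\<in>\<T>1. \<forall>T2\<in>\<T>1. T1 \<noteq> T2 \<longrightarrow> T1 \<inter> T2 = {}) \<and>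
            (\<forall>T\<in>\<T>1. good_piece h k T) \<and>
            card H1 \<le> (2*k - 1) * card \<T>1 + (k - 1) * card (h ` H1 - H1)" by (rule exE)
    note T1 = T1all[THEN conjunct1] T1all[THEN conjunct2, THEN conjunct1]
      T1all[THEN conjunct2, THEN conjunct2, THEN conjunct1] T1all[THEN conjunct2, THEN conjunct2, THEN conjunct2]
    have ex1: "h ` H1 - H1 \<subseteq> h ` H - H"
    proof
      fix z assume "z \<in> h ` H1 - H1"
      then obtain y where y: "y \<in> H1" "z = h y" "z \<notin> H1" by auto
      have "z \<notin> T" using preT y unfolding H1_def by auto
      thus "z \<in> h ` H - H" using y unfolding H1_def by auto
    qed
    have cex: "card (h ` H1 - H1) \<le> card (h ` H - H)" using fin by (intro card_mono[OF _ ex1]) auto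
    have TnotT1: "T \<notin> \<T>1" using T1(1) Tne unfolding H1_def by auto
    have finT1: "finite \<T>1" by (rule finite_subset[OF T1(1)]) (simp add: fin1)
    have goodT: "good_piece h k T"
      unfolding good_piece_def using finT Tne C' xT hT unfolding T_def by auto
    have cardH: "card H = card H1 + card T"
    proof -
      have "card H1 = card H - card T" unfolding H1_def by (rule card_Diff_subset[OF finT TH])
      moreover have "card T \<le> card H" by (rule card_mono[OF fin TH])
      ultimately show ?thesis by simp
    qed
    show ?thesis
    proof (intro exI[of _ "insert T \<T>1"] conjI)
      show "insert T \<T>1 \<subseteq> Pow H" using T1(1) TH unfolding H1_def by auto
      show "\<forall>T1a\<in>insert T \<T>1. \<forall>T2\<in>insert T \<T>1. T1a \<noteq> T2 \<longrightarrow> T1a \<inter> T2 = {}"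
      proof (intro ballI impI)
        fix A B assume A: "A \<in> insert T \<T>1" and B: "B \<in> insert T \<T>1" and AB: "A \<noteq> B"
        have d1: "A \<inter> T = {}" if "A \<in> \<T>1" for A using that T1(1) unfolding H1_def by auto
        show "A \<inter> B = {}"
        proof (cases "A = T")
          case True thus ?thesis using B AB d1 by auto
        next
          case False
          hence A1: "A \<in> \<T>1" using A by auto
          show ?thesis
          proof (cases "B = T")
            case True thus ?thesis using d1[OF A1] by auto
          next
            case False thus ?thesis using B A1 AB T1(2) by auto
          qed
        qed
      qed
      show "\<forall>T\<in>insert T \<T>1. good_piece h k T" using T1(3) goodT by auto
      have "card H \<le> (2*k - 1) * card \<T>1 + (k - 1) * card (h ` H1 - H1) + (2*k - 1)"
        using cardH T1(4) C'(3) unfolding T_def by linarith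
      also have "\<dots> \<le> (2*k - 1) * card \<T>1 + (k - 1) * card (h ` H - H) + (2*k - 1)"
        using cex by (intro add_mono mult_left_mono) auto
      also have "\<dots> = (2*k - 1) * card (insert T \<T>1) + (k - 1) * card (h ` H - H)"
        by (simp only: card_insert_disjoint[OF finT1 TnotT1] mult_Suc_right)
      finally show "card H \<le> (2*k - 1) * card (insert T \<T>1) + (k - 1) * card (h ` H - H)" .
    qed
  qed
qed


definition cycmins :: "(nat \<Rightarrow> nat) \<Rightarrow> nat set \<Rightarrow> nat set" where
  "cycmins h H = {z\<in>H. (\<forall>i. (h ^^ i) z \<in> H) \<and> (\<exists>p>0. (h ^^ p) z = z) \<and> (\<forall>i. z \<le> (h ^^ i) z)}"

lemma orbit_repeat:
  assumes "finite H" "\<forall>i. (h ^^ i) y \<in> H"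
  shows "\<exists>a b. a < b \<and> (h ^^ a) y = (h ^^ b) y"
proof -
  have "\<not> inj_on (\<lambda>i. (h ^^ i) y) {..card H}"
  proof
    assume "inj_on (\<lambda>i. (h ^^ i) y) {..card H}"
    moreover have "(\<lambda>i. (h ^^ i) y) ` {..card H} \<subseteq> H" using assms by auto
    ultimately have "card {..card H} \<le> card H" by (intro card_inj_on_le[OF _ _ assms(1)])
    thus False by simp
  qed
  then obtain i j where "i \<noteq> j" "(h ^^ i) y = (h ^^ j) y" unfolding inj_on_def by auto
  thus ?thesis by (metis linorder_neq_iff)
qed

lemma acyc_minus_cycmins:
  assumes "finite H"
  shows "acyc h (H - cycmins h H)"
  unfolding acyc_def
proof (rule ballI, rule ccontr)
  fix y assume y: "y \<in> H - cycmins h H" and "\<not> (\<exists>i. (h ^^ i) y \<notin> H - cycmins h H)"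
  hence all: "\<forall>i. (h ^^ i) y \<in> H - cycmins h H" by auto
  hence "\<forall>i. (h ^^ i) y \<in> H" by auto
  from orbit_repeat[OF assms this] obtain a b where ab: "a < b" "(h ^^ a) y = (h ^^ b) y" by auto
  define v where "v = (h ^^ a) y"
  define p where "p = b - a"
  have p0: "0 < p" unfolding p_def using ab by simp
  have perv: "(h ^^ p) v = v"
  proof -
    have "(h ^^ p) v = (h ^^ (p + a)) y" unfolding v_def by (simp add: funpow_add)
    also have "p + a = b" unfolding p_def using ab by simp
    finally show ?thesis using ab unfolding v_def by simp
  qed
  define Orb where "Orb = (\<lambda>i. (h ^^ i) v) ` {..<p}"
  have Ofin: "finite Orb" "Orb \<noteq> {}" unfolding Orb_def using p0 by auto
  define mn where "mn = Min Orb"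
  have "mn \<in> Orb" unfolding mn_def using Ofin by (rule Min_in)
  then obtain t where t: "t < p" "mn = (h ^^ t) v" unfolding Orb_def by auto
  have mny: "(h ^^ i) mn = (h ^^ (i + t + a)) y" for i unfolding t v_def by (simp add: funpow_add)
  have "mn \<in> cycmins h H" unfolding cycmins_def
  proof (intro CollectI conjI allI exI[of _ p])
    show "mn \<in> H" using mny[of 0] all by (metis DiffD1 funpow_0)
    fix i show "(h ^^ i) mn \<in> H" using mny[of i] all by auto
  next
    show "0 < p" by (rule p0)
    show "(h ^^ p) mn = mn" unfolding t by (metis funpow_swap1 funpow_add comp_apply perv add.commute)
  next
    fix i
    have "(h ^^ i) mn = (h ^^ (i + t)) v" unfolding t by (simp add: funpow_add)
    also have "\<dots> = (h ^^ ((i + t) mod p)) v" by (rule funpow_mod_fix[OF perv])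
    also have "\<dots> \<in> Orb" unfolding Orb_def using p0 by auto
    finally show "mn \<le> (h ^^ i) mn" unfolding mn_def using Ofin by auto
  qed
  moreover have "mn \<in> H - cycmins h H" using mny[of 0] all by simp
  ultimately show False by auto
qed

definition cpiece :: "(nat \<Rightarrow> nat) \<Rightarrow> nat \<Rightarrow> nat \<Rightarrow> nat set" where
  "cpiece h k z = (\<lambda>i. (h ^^ i) z) ` {..<k}"

lemma cpiece_good:
  assumes "1 \<le> k"
  shows "good_piece h k (cpiece h k z)"
proof -
  let ?T = "cpiece h k z"
  have fin: "finite ?T" unfolding cpiece_def by auto
  have ne: "?T \<noteq> {}" unfolding cpiece_def using assms by (simp add: lessThan_empty_iff)
  have card: "card ?T \<le> 2*k" unfolding cpiece_def using card_image_le[of "{..<k}" "\<lambda>i. (h ^^ i) z"] by simp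
  have step: "h ` ?T \<subseteq> insert ((h ^^ k) z) ?T"
  proof
    fix x assume "x \<in> h ` ?T"
    then obtain i where i: "i < k" "x = h ((h ^^ i) z)" unfolding cpiece_def by auto
    hence x: "x = (h ^^ Suc i) z" by simp
    show "x \<in> insert ((h ^^ k) z) ?T"
    proof (cases "Suc i < k")
      case True thus ?thesis unfolding x cpiece_def by (intro insertI2 image_eqI[of _ _ "Suc i"]) auto
    next
      case False hence "Suc i = k" using i by simp
      thus ?thesis unfolding x by simp
    qed
  qed
  show ?thesis
  proof (cases "(h ^^ k) z \<in> ?T")
    case True
    hence cl: "h ` ?T \<subseteq> ?T" using step by auto
    obtain r where "r \<notin> ?T" using fin by (meson ex_new_if_finite infinite_UNIV_nat)
    thus ?thesis unfolding good_piece_def using fin ne card cl by blast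
  next
    case False
    have "inj_on (\<lambda>i. (h ^^ i) z) {..<k}"
    proof (rule ccontr)
      assume "\<not> inj_on (\<lambda>i. (h ^^ i) z) {..<k}"
      then obtain i j where ij: "i < k" "j < k" "i \<noteq> j" "(h ^^ i) z = (h ^^ j) z" unfolding inj_on_def by auto
      then obtain a b where ab: "a < b" "b < k" "(h ^^ a) z = (h ^^ b) z" by (metis linorder_neq_iff)
      have "(h ^^ k) z = (h ^^ (k - b + b)) z" using ab by simp
      also have "\<dots> = (h ^^ (k - b)) ((h ^^ b) z)" by (simp only: funpow_add comp_apply)
      also have "\<dots> = (h ^^ (k - b)) ((h ^^ a) z)" using ab by simp
      also have "\<dots> = (h ^^ (k - b + a)) z" by (simp add: funpow_add)
      finally have "(h ^^ k) z \<in> ?T" unfolding cpiece_def using ab by auto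
      thus False using False by simp
    qed
    hence "card ?T = k" unfolding cpiece_def by (simp add: card_image)
    thus ?thesis unfolding good_piece_def using fin ne card step False by auto
  qed
qed

lemma cpiece_sub:
  assumes "z \<in> cycmins h H" shows "cpiece h k z \<subseteq> H"
  using assms unfolding cpiece_def cycmins_def by auto

lemma cpiece_disj:
  assumes "z \<in> cycmins h H" "z' \<in> cycmins h H" "z \<noteq> z'"
  shows "cpiece h k z \<inter> cpiece h k z' = {}"
proof (rule ccontr)
  assume "cpiece h k z \<inter> cpiece h k z' \<noteq> {}"
  then obtain i j where ij: "(h ^^ i) z = (h ^^ j) z'" unfolding cpiece_def by auto
  have inorb: "\<exists>t. (h ^^ t) y = y'" if "y' \<in> cycmins h H" "(h ^^ i') y = (h ^^ j') y'" for y y' i' j'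
  proof -
    from that(1) obtain p where p: "p > 0" "(h ^^ p) y' = y'" unfolding cycmins_def by auto
    have "(h ^^ (p * (j' + 1))) y' = y'" using funpow_mult_fix[OF p(2), of "j' + 1"] by (simp add: mult.commute)
    moreover have "p * (j' + 1) \<ge> j'"
    proof -
      have "j' \<le> p * j'" using p by simp
      moreover have "p * j' \<le> p * (j' + 1)" by simp
      ultimately show ?thesis by (rule order_trans)
    qed
    ultimately have "y' = (h ^^ (p * (j' + 1) - j')) ((h ^^ j') y')"
      by (metis funpow_add le_add_diff_inverse2 comp_apply)
    also have "\<dots> = (h ^^ (p * (j' + 1) - j' + i')) y" using that(2) by (simp add: funpow_add)
    finally show ?thesis by metis
  qed
  obtain t where "(h ^^ t) z = z'" using inorb[OF assms(2) ij] by auto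
  hence "z \<le> z'" using assms(1) unfolding cycmins_def by auto
  moreover obtain t' where "(h ^^ t') z' = z" using inorb[OF assms(1) ij[symmetric]] by auto
  hence "z' \<le> z" using assms(2) unfolding cycmins_def by auto
  ultimately show False using assms(3) by simp
qed


lemma heavy_pieces:
  assumes "finite H" "1 \<le> k"
    and big: "(2*k - 1) * R + (k - 1) * (card (h ` H - H) + R) + R < card H"
  shows "\<exists>\<T>. \<T> \<subseteq> Pow H \<and> (\<forall>T1\<in>\<T>. \<forall>T2\<in>\<T>. T1 \<noteq> T2 \<longrightarrow> T1 \<inter> T2 = {}) \<and>
            (\<forall>T\<in>\<T>. good_piece h k T) \<and> card \<T> = R"
proof -
  define Z where "Z = cycmins h H"
  have ZH: "Z \<subseteq> H" unfolding Z_def cycmins_def by auto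
  have finZ: "finite Z" using ZH assms(1) by (rule finite_subset)
  have "\<exists>\<T>. \<T> \<subseteq> Pow H \<and> (\<forall>T1\<in>\<T>. \<forall>T2\<in>\<T>. T1 \<noteq> T2 \<longrightarrow> T1 \<inter> T2 = {}) \<and>
            (\<forall>T\<in>\<T>. good_piece h k T) \<and> R \<le> card \<T>"
  proof (cases "R \<le> card Z")
    case True
    define \<T> where "\<T> = cpiece h k ` Z"
    have ne: "cpiece h k z \<noteq> {}" for z using cpiece_good[OF assms(2), of h z] unfolding good_piece_def by auto
    have inj: "inj_on (cpiece h k) Z"
    proof (rule inj_onI, rule ccontr)
      fix z z' assume "z \<in> Z" "z' \<in> Z" "cpiece h k z = cpiece h k z'" "z \<noteq> z'"
      thus False using cpiece_disj[of z h H z' k] ne[of z] unfolding Z_def by auto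
    qed
    have s1: "\<T> \<subseteq> Pow H"
    proof
      fix A assume "A \<in> \<T>"
      then obtain z where "z \<in> Z" "A = cpiece h k z" unfolding \<T>_def by auto
      thus "A \<in> Pow H" using cpiece_sub[of z h H k] unfolding Z_def by auto
    qed
    have s2: "\<forall>T1\<in>\<T>. \<forall>T2\<in>\<T>. T1 \<noteq> T2 \<longrightarrow> T1 \<inter> T2 = {}"
    proof (intro ballI impI)
      fix A B assume "A \<in> \<T>" "B \<in> \<T>" "A \<noteq> B"
      then obtain z z' where z: "z \<in> Z" "A = cpiece h k z" "z' \<in> Z" "B = cpiece h k z'" unfolding \<T>_def by auto
      hence "z \<noteq> z'" using \<open>A \<noteq> B\<close> by auto
      thus "A \<inter> B = {}" using cpiece_disj[of z h H z' k] z unfolding Z_def by simp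
    qed
    have s3: "\<forall>T\<in>\<T>. good_piece h k T" unfolding \<T>_def using cpiece_good[OF assms(2)] by simp
    have s4: "R \<le> card \<T>" unfolding \<T>_def using True card_image[OF inj] by simp
    show ?thesis using s1 s2 s3 s4 by (intro exI[of _ \<T>] conjI)
  next
    case False
    have ac: "acyc h (H - Z)" unfolding Z_def by (rule acyc_minus_cycmins[OF assms(1)])
    have "\<exists>\<T>. \<T> \<subseteq> Pow (H - Z) \<and> (\<forall>T1\<in>\<T>. \<forall>T2\<in>\<T>. T1 \<noteq> T2 \<longrightarrow> T1 \<inter> T2 = {}) \<and>
            (\<forall>T\<in>\<T>. good_piece h k T) \<and>
            card (H - Z) \<le> (2*k - 1) * card \<T> + (k - 1) * card (h ` (H - Z) - (H - Z))"
      by (rule tree_pieces[OF assms(2) _ ac]) (use assms(1) in simp)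
    then obtain \<T> where Tall: "\<T> \<subseteq> Pow (H - Z) \<and> (\<forall>T1\<in>\<T>. \<forall>T2\<in>\<T>. T1 \<noteq> T2 \<longrightarrow> T1 \<inter> T2 = {}) \<and>
            (\<forall>T\<in>\<T>. good_piece h k T) \<and>
            card (H - Z) \<le> (2*k - 1) * card \<T> + (k - 1) * card (h ` (H - Z) - (H - Z))" by (rule exE)
    note T = Tall[THEN conjunct1] Tall[THEN conjunct2, THEN conjunct1]
      Tall[THEN conjunct2, THEN conjunct2, THEN conjunct1] Tall[THEN conjunct2, THEN conjunct2, THEN conjunct2]
    have ex: "h ` (H - Z) - (H - Z) \<subseteq> (h ` H - H) \<union> Z" by auto
    have "card (h ` (H - Z) - (H - Z)) \<le> card ((h ` H - H) \<union> Z)"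
      using assms(1) finZ by (intro card_mono[OF _ ex]) auto
    also have "\<dots> \<le> card (h ` H - H) + card Z" by (rule card_Un_le)
    finally have cex: "card (h ` (H - Z) - (H - Z)) \<le> card (h ` H - H) + R" using False by linarith
    have cH: "card H = card (H - Z) + card Z"
      using card_Diff_subset[OF finZ ZH] card_mono[OF assms(1) ZH] by simp
    have h: "card H \<le> (2*k - 1) * card \<T> + (k - 1) * (card (h ` H - H) + R) + R"
    proof -
      have "(k - 1) * card (h ` (H - Z) - (H - Z)) \<le> (k - 1) * (card (h ` H - H) + R)"
        using cex by (rule mult_left_mono) simp
      thus ?thesis using cH T(4) False by linarith
    qed
    have "R \<le> card \<T>"
    proof (rule ccontr)
      assume "\<not> R \<le> card \<T>"
      hence "(2*k - 1) * card \<T> \<le> (2*k - 1) * R" by simp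
      thus False using h big by linarith
    qed
    moreover have "\<T> \<subseteq> Pow H" using T(1) by auto
    ultimately show ?thesis using T(2,3) by (intro exI[of _ \<T>] conjI)
  qed
  then obtain \<T> where Tall: "\<T> \<subseteq> Pow H \<and> (\<forall>T1\<in>\<T>. \<forall>T2\<in>\<T>. T1 \<noteq> T2 \<longrightarrow> T1 \<inter> T2 = {}) \<and>
            (\<forall>T\<in>\<T>. good_piece h k T) \<and> R \<le> card \<T>" by (rule exE)
  note T = Tall[THEN conjunct1] Tall[THEN conjunct2, THEN conjunct1]
      Tall[THEN conjunct2, THEN conjunct2, THEN conjunct1] Tall[THEN conjunct2, THEN conjunct2, THEN conjunct2]
  obtain \<T>' where T': "\<T>' \<subseteq> \<T>" "card \<T>' = R" using obtain_subset_with_card_n[OF T(4)] by metis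
  have "\<T>' \<subseteq> Pow H" using T'(1) T(1) by (rule order_trans)
  moreover have "\<forall>T1\<in>\<T>'. \<forall>T2\<in>\<T>'. T1 \<noteq> T2 \<longrightarrow> T1 \<inter> T2 = {}" using T'(1) T(2) by (meson subsetD)
  moreover have "\<forall>T\<in>\<T>'. good_piece h k T" using T'(1) T(3) by (meson subsetD)
  ultimately show ?thesis using T'(2) by (intro exI[of _ \<T>'] conjI)
qed


lemma gl_k:
  fixes M :: "'a pmf" and E :: "'i \<Rightarrow> 'a set" and I :: "'i set"
  assumes fin: "finite I"
    and negc: "\<And>i j. i\<in>I \<Longrightarrow> j\<in>I \<Longrightarrow> i\<noteq>j \<Longrightarrow>
        measure_pmf.prob M (E i \<inter> E j) \<le> measure_pmf.prob M (E i) * measure_pmf.prob M (E j)"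
    and mu0: "\<mu>0 \<le> (\<Sum>i\<in>I. measure_pmf.prob M (E i))" "2 * real k \<le> \<mu>0" "0 < \<mu>0"
  shows "measure_pmf.prob M {x. k \<le> card {i\<in>I. x \<in> E i}} \<ge> 1 - 4 / \<mu>0"
proof -
  define \<mu> where "\<mu> = (\<Sum>i\<in>I. measure_pmf.prob M (E i))"
  have mu: "\<mu>0 \<le> \<mu>" using mu0 unfolding \<mu>_def by simp
  have kmu: "real k < \<mu>" using mu mu0 by linarith
  have gl: "measure_pmf.prob M {x. real (card {i\<in>I. x \<in> E i}) < real k} \<le> \<mu> / (\<mu> - real k)^2"
    unfolding \<mu>_def by (rule second_moment_count[OF fin negc]) (use kmu in \<open>auto simp: \<mu>_def\<close>)
  have "\<mu> / (\<mu> - real k)^2 \<le> 4 / \<mu>"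
  proof -
    have h: "\<mu> / 2 \<le> \<mu> - real k" using mu mu0 by linarith
    have "(\<mu> / 2)^2 \<le> (\<mu> - real k)^2" using h mu mu0 by (intro power_mono) auto
    hence "\<mu> / (\<mu> - real k)^2 \<le> \<mu> / (\<mu> / 2)^2" using mu mu0
      by (intro divide_left_mono) auto
    also have "\<dots> = 4 / \<mu>" using mu mu0 by (simp add: power2_eq_square field_simps)
    finally show ?thesis .
  qed
  also have "4 / \<mu> \<le> 4 / \<mu>0" using mu mu0 by (intro divide_left_mono) auto
  finally have b: "measure_pmf.prob M {x. real (card {i\<in>I. x \<in> E i}) < real k} \<le> 4 / \<mu>0"
    using gl by linarith
  have "{x. k \<le> card {i\<in>I. x \<in> E i}} = UNIV - {x. real (card {i\<in>I. x \<in> E i}) < real k}" by auto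
  hence "measure_pmf.prob M {x. k \<le> card {i\<in>I. x \<in> E i}} = 1 - measure_pmf.prob M {x. real (card {i\<in>I. x \<in> E i}) < real k}"
    using measure_pmf.prob_compl[of "{x. real (card {i\<in>I. x \<in> E i}) < real k}" M] by simp
  thus ?thesis using b by linarith
qed

lemma gl_exists:
  fixes M :: "'a pmf" and E :: "'i \<Rightarrow> 'a set" and I :: "'i set"
  assumes fin: "finite I"
    and negc: "\<And>i j. i\<in>I \<Longrightarrow> j\<in>I \<Longrightarrow> i\<noteq>j \<Longrightarrow>
        measure_pmf.prob M (E i \<inter> E j) \<le> measure_pmf.prob M (E i) * measure_pmf.prob M (E j)"
    and mu0: "\<mu>0 \<le> (\<Sum>i\<in>I. measure_pmf.prob M (E i))" "2 \<le> \<mu>0"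
  shows "measure_pmf.prob M {x. \<exists>i\<in>I. x \<in> E i} \<ge> 1 - 4 / \<mu>0"
proof -
  have "measure_pmf.prob M {x. 1 \<le> card {i\<in>I. x \<in> E i}} \<ge> 1 - 4 / \<mu>0"
    by (rule gl_k[OF fin negc mu0(1)]) (use mu0 in auto)
  moreover have "{x. 1 \<le> card {i\<in>I. x \<in> E i}} \<subseteq> {x. \<exists>i\<in>I. x \<in> E i}"
    using fin by (auto simp: Suc_le_eq card_gt_0_iff)
  ultimately show ?thesis using measure_pmf.finite_measure_mono[of "{x. 1 \<le> card {i\<in>I. x \<in> E i}}" "{x. \<exists>i\<in>I. x \<in> E i}" M]
    by simp
qed

lemma spread_many:
  fixes r :: "nat \<Rightarrow> nat pmf"
  assumes finP: "finite P"
    and spread: "\<forall>a\<in>P. \<forall>w. pmf (r a) w \<le> \<tau>" and tau: "0 \<le> \<tau>"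
    and th: "0 \<le> \<theta> - real (k+1) * \<tau>" "\<theta> \<le> 1"
    and finG: "finite G" and Gth: "\<forall>w\<in>G. \<theta> \<le> (\<Sum>a\<in>P. pmf (r a) w)"
    and mu0: "\<mu>0 = real (card G) * ((\<theta> - real (k+1) * \<tau>) ^ k / fact k * (1 - \<theta>))" "2 \<le> \<mu>0"
  shows "measure_pmf.prob (Pi_pmf P dflt r) {\<alpha>. \<exists>w\<in>G. k \<le> cnt P w \<alpha>} \<ge> 1 - 4 / \<mu>0"
proof -
  let ?M = "Pi_pmf P dflt r"
  define E where "E = (\<lambda>w. {\<alpha>. k \<le> cnt P w \<alpha>})"
  define LB where "LB = (\<theta> - real (k+1) * \<tau>) ^ k / fact k * (1 - \<theta>)"
  have lb: "LB \<le> measure_pmf.prob ?M (E w)" if w: "w \<in> G" for w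
  proof -
    have th0: "0 \<le> \<theta>" using th tau by (metis diff_ge_0_iff_ge mult_nonneg_nonneg of_nat_0_le_iff order_trans)
    have "\<exists>T\<subseteq>P. \<theta> - \<tau> \<le> (\<Sum>a\<in>T. pmf (r a) w) \<and> (\<Sum>a\<in>T. pmf (r a) w) \<le> \<theta>"
      by (rule trim_subset[OF finP]) (use spread tau th Gth w th0 in auto)
    then obtain T where T: "T \<subseteq> P" "\<theta> - \<tau> \<le> (\<Sum>a\<in>T. pmf (r a) w)" "(\<Sum>a\<in>T. pmf (r a) w) \<le> \<theta>" by blast
    define s where "s = (\<Sum>a\<in>T. pmf (r a) w)"
    have finT: "finite T" using T finP by (auto intro: finite_subset)
    have "measure_pmf.prob (Pi_pmf T dflt r) {f. k \<le> cnt T w f} \<ge> (max 0 (s - real k * \<tau>)) ^ k / fact k * (1 - s)"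
      unfolding s_def by (rule cnt_LB[OF finT tau]) (use T spread in auto)
    moreover have "(max 0 (s - real k * \<tau>)) ^ k / fact k * (1 - s) \<ge> LB"
    proof -
      have "\<theta> - real (k+1) * \<tau> \<le> max 0 (s - real k * \<tau>)" using T unfolding s_def by (auto simp: algebra_simps)
      hence "(\<theta> - real (k+1) * \<tau>) ^ k \<le> (max 0 (s - real k * \<tau>)) ^ k" using th by (intro power_mono) auto
      hence a: "(\<theta> - real (k+1) * \<tau>) ^ k / fact k \<le> (max 0 (s - real k * \<tau>)) ^ k / fact k"
        by (intro divide_right_mono) auto
      have b: "1 - \<theta> \<le> 1 - s" using T unfolding s_def by simp
      show ?thesis unfolding LB_def using th
        by (intro mult_mono a b) auto
    qed
    moreover have "measure_pmf.prob (Pi_pmf T dflt r) {f. k \<le> cnt T w f} \<le> measure_pmf.prob ?M (E w)"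
      unfolding E_def by (rule cnt_mono_prob[OF finP T(1)])
    ultimately show ?thesis by linarith
  qed
  have "\<mu>0 \<le> (\<Sum>w\<in>G. measure_pmf.prob ?M (E w))"
  proof -
    have "(\<Sum>w\<in>G. LB) \<le> (\<Sum>w\<in>G. measure_pmf.prob ?M (E w))" using lb by (intro sum_mono) auto
    thus ?thesis unfolding mu0(1) LB_def by simp
  qed
  from gl_exists[OF finG _ this mu0(2)]
  have "measure_pmf.prob ?M {x. \<exists>i\<in>G. x \<in> E i} \<ge> 1 - 4 / \<mu>0"
  proof -
    have "\<And>i j::nat. i \<in> G \<Longrightarrow> j \<in> G \<Longrightarrow> i \<noteq> j \<Longrightarrow>
      measure_pmf.prob ?M (E i \<inter> E j) \<le> measure_pmf.prob ?M (E i) * measure_pmf.prob ?M (E j)"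
    proof -
      fix i j :: nat assume "i \<noteq> j"
      have "E i \<inter> E j = {f. k \<le> cnt P i f \<and> k \<le> cnt P j f}" unfolding E_def by auto
      thus "measure_pmf.prob ?M (E i \<inter> E j) \<le> measure_pmf.prob ?M (E i) * measure_pmf.prob ?M (E j)"
        using cnt_negcor[OF finP \<open>i \<noteq> j\<close>, of dflt r k k] unfolding E_def by simp
    qed
    thus ?thesis using gl_exists[OF finG _ \<open>\<mu>0 \<le> _\<close> mu0(2)] by blast
  qed
  thus ?thesis unfolding E_def by simp
qed

lemma spread_one:
  fixes r :: "nat \<Rightarrow> nat pmf"
  assumes finP: "finite P"
    and mu0: "\<mu>0 \<le> (\<Sum>a\<in>P. pmf (r a) w)" "2 * real k \<le> \<mu>0" "0 < \<mu>0"
  shows "measure_pmf.prob (Pi_pmf P dflt r) {\<alpha>. k \<le> cnt P w \<alpha>} \<ge> 1 - 4 / \<mu>0"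
proof -
  let ?M = "Pi_pmf P dflt r"
  define E where "E = (\<lambda>a. {\<alpha>::nat\<Rightarrow>nat. \<alpha> a = w})"
  have pE: "measure_pmf.prob ?M (E a) = pmf (r a) w" if "a \<in> P" for a
  proof -
    have "E a = {f. \<forall>x\<in>{a}. f x \<in> {w}}" unfolding E_def by auto
    thus ?thesis using prob_Pi_rect_sub[OF finP, of "{a}" dflt r "\<lambda>_. {w}"] that by (simp add: measure_pmf_single)
  qed
  have negc: "measure_pmf.prob ?M (E a \<inter> E b) \<le> measure_pmf.prob ?M (E a) * measure_pmf.prob ?M (E b)"
    if "a \<in> P" "b \<in> P" "a \<noteq> b" for a b
  proof -
    have "E a \<inter> E b = {f. \<forall>x\<in>{a,b}. f x \<in> {w}}" unfolding E_def by auto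
    hence "measure_pmf.prob ?M (E a \<inter> E b) = (\<Prod>x\<in>{a,b}. measure_pmf.prob (r x) {w})"
      using prob_Pi_rect_sub[OF finP, of "{a,b}" dflt r "\<lambda>_. {w}"] that by simp
    also have "\<dots> = pmf (r a) w * pmf (r b) w" using that by (simp add: measure_pmf_single)
    finally show ?thesis using pE that by simp
  qed
  have "\<mu>0 \<le> (\<Sum>a\<in>P. measure_pmf.prob ?M (E a))" using mu0(1) pE by simp
  from gl_k[OF finP negc this mu0(2,3)]
  have "measure_pmf.prob ?M {x. k \<le> card {i\<in>P. x \<in> E i}} \<ge> 1 - 4 / \<mu>0" by blast
  thus ?thesis unfolding E_def cnt_def by simp
qed


definition LS :: "nat \<Rightarrow> nat \<Rightarrow> nat set \<Rightarrow> nat \<Rightarrow> (nat \<Rightarrow> nat) \<Rightarrow> bool" where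
  "LS n d B k \<alpha> \<longleftrightarrow> (\<exists>w\<in>{..<n}-{d}. k \<le> cnt B w \<alpha>) \<or> (\<exists>T\<subseteq>B. T \<noteq> {} \<and> (\<forall>v\<in>T. \<alpha> v \<in> T)) \<or>
     (\<exists>T\<subseteq>B. \<exists>\<rho>\<in>{..<n}-{d}. \<rho> \<notin> T \<and> (\<forall>v\<in>T. \<alpha> v \<in> insert \<rho> T) \<and> k \<le> card T)"

lemma LS_local1:
  assumes "\<forall>x\<in>B. f x = g x" "LS n d B k f"
  shows "LS n d B k g"
proof -
  have c: "cnt B w f = cnt B w g" for w
    unfolding cnt_def using assms(1) by (intro arg_cong[where f=card] Collect_cong) auto
  consider (a) "\<exists>w\<in>{..<n}-{d}. k \<le> cnt B w f" | (b) "\<exists>T\<subseteq>B. T \<noteq> {} \<and> (\<forall>v\<in>T. f v \<in> T)"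
    | (c) "\<exists>T\<subseteq>B. \<exists>\<rho>\<in>{..<n}-{d}. \<rho> \<notin> T \<and> (\<forall>v\<in>T. f v \<in> insert \<rho> T) \<and> k \<le> card T"
    using assms(2) unfolding LS_def by blast
  thus ?thesis
  proof cases
    case a thus ?thesis unfolding LS_def c by blast
  next
    case b
    then obtain T where T: "T \<subseteq> B" "T \<noteq> {}" "\<forall>v\<in>T. f v \<in> T" by blast
    have "\<forall>v\<in>T. g v \<in> T"
    proof
      fix v assume v: "v \<in> T"
      hence "g v = f v" using T(1) assms(1) by auto
      thus "g v \<in> T" using T(3) v by simp
    qed
    thus ?thesis unfolding LS_def using T by blast
  next
    case c
    then obtain T \<rho> where T: "T \<subseteq> B" "\<rho>\<in>{..<n}-{d}" "\<rho> \<notin> T" "\<forall>v\<in>T. f v \<in> insert \<rho> T" "k \<le> card T"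
      by blast
    have "\<forall>v\<in>T. g v \<in> insert \<rho> T"
    proof
      fix v assume v: "v \<in> T"
      hence "g v = f v" using T(1) assms(1) by auto
      thus "g v \<in> insert \<rho> T" using T(4) v by simp
    qed
    thus ?thesis unfolding LS_def using T by blast
  qed
qed

lemma LS_local:
  assumes "\<forall>x\<in>B. f x = g x"
  shows "LS n d B k f \<longleftrightarrow> LS n d B k g"
  using LS_local1[OF assms] LS_local1[of B g f] assms by auto

lemma LS_load:
  assumes B: "B \<subseteq> {..<n}-{d}" "finite B" and H: "\<forall>v<n. \<alpha> v < n" and ls: "LS n d B k \<alpha>"
  shows "\<exists>v\<in>{..<n}-{d}. ereal (real k) \<le> load n \<alpha> d v"
proof -
  consider (a) "\<exists>w\<in>{..<n}-{d}. k \<le> cnt B w \<alpha>" | (b) "\<exists>T\<subseteq>B. T \<noteq> {} \<and> (\<forall>v\<in>T. \<alpha> v \<in> T)"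
    | (c) "\<exists>T\<subseteq>B. \<exists>\<rho>\<in>{..<n}-{d}. \<rho> \<notin> T \<and> (\<forall>v\<in>T. \<alpha> v \<in> insert \<rho> T) \<and> k \<le> card T"
    using ls unfolding LS_def by blast
  thus ?thesis
  proof cases
    case a
    then obtain w where "w \<in> {..<n}-{d}" "k \<le> cnt B w \<alpha>" by auto
    thus ?thesis using spread_load[OF B] by blast
  next
    case b
    then obtain T where T: "T \<subseteq> B" "T \<noteq> {}" "\<forall>v\<in>T. \<alpha> v \<in> T" by auto
    then obtain u where u: "u \<in> T" by auto
    have "(\<alpha> ^^ j) u \<in> T" for j using u T(3) by (induction j) auto
    hence "\<forall>j. (\<alpha> ^^ j) u \<noteq> d" using T B by auto
    from inf_load[OF H _ _ this] u T B obtain v where "v\<in>{..<n}-{d}" "load n \<alpha> d v = \<infinity>" by auto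
    thus ?thesis by (intro bexI[of _ v]) auto
  next
    case c
    then obtain T \<rho> where T: "T \<subseteq> B" "\<rho>\<in>{..<n}-{d}" "\<rho> \<notin> T" "\<forall>v\<in>T. \<alpha> v \<in> insert \<rho> T" "k \<le> card T"
      by auto
    show ?thesis
    proof (cases "T = {}")
      case True
      hence "k = 0" using T by simp
      thus ?thesis using T(2) by (intro bexI[of _ \<rho>]) (auto simp: load_def)
    next
      case False
      show ?thesis
        by (rule piece_load[OF H _ False _ T(2,3,4)]) (use T B finite_subset in auto)
    qed
  qed
qed

lemma heavy_case:
  fixes r :: "nat \<Rightarrow> nat pmf"
  assumes finH: "finite H"
    and hp: "\<forall>v\<in>H. \<tau> \<le> pmf (r v) (h v)" and tau: "0 \<le> \<tau>" "\<tau> \<le> 1"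
    and TT: "\<T> \<subseteq> Pow H" "\<forall>T1\<in>\<T>. \<forall>T2\<in>\<T>. T1 \<noteq> T2 \<longrightarrow> T1 \<inter> T2 = {}"
       "\<forall>T\<in>\<T>. good_piece h k T" "card \<T> = R"
    and mu0: "\<mu>0 = real R * \<tau> ^ (2*k)" "2 \<le> \<mu>0"
  shows "measure_pmf.prob (Pi_pmf (\<Union>\<T>) dflt r) {\<alpha>. \<exists>T\<in>\<T>. \<forall>v\<in>T. \<alpha> v = h v} \<ge> 1 - 4 / \<mu>0"
proof -
  define B where "B = \<Union>\<T>"
  let ?M = "Pi_pmf B dflt r"
  have finTT: "finite \<T>" by (rule finite_subset[OF TT(1)]) (simp add: finH)
  have finB: "finite B"
  proof -
    have "B \<subseteq> H" unfolding B_def using TT(1) by auto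
    thus ?thesis using finH by (rule finite_subset)
  qed
  define E where "E = (\<lambda>T. {\<alpha>::nat\<Rightarrow>nat. \<forall>v\<in>T. \<alpha> v \<in> {h v}})"
  have pE: "measure_pmf.prob ?M (E T) = (\<Prod>v\<in>T. pmf (r v) (h v))" if "T \<in> \<T>" for T
  proof -
    have "T \<subseteq> B" unfolding B_def using that by auto
    thus ?thesis unfolding E_def using prob_Pi_rect_sub[OF finB, of T dflt r "\<lambda>v. {h v}"]
      by (simp add: measure_pmf_single)
  qed
  have lbE: "\<tau> ^ (2*k) \<le> measure_pmf.prob ?M (E T)" if T: "T \<in> \<T>" for T
  proof -
    have TH: "T \<subseteq> H" using TT(1) T by auto
    have g: "good_piece h k T" using TT(3) T by auto
    have "\<tau> ^ (2*k) \<le> \<tau> ^ card T" using g tau unfolding good_piece_def by (intro power_decreasing) auto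
    also have "\<tau> ^ card T = (\<Prod>v\<in>T. \<tau>)" by simp
    also have "\<dots> \<le> (\<Prod>v\<in>T. pmf (r v) (h v))" using hp TH tau by (intro prod_mono) auto
    finally show ?thesis using pE T by simp
  qed
  have negc: "measure_pmf.prob ?M (E T1 \<inter> E T2) \<le> measure_pmf.prob ?M (E T1) * measure_pmf.prob ?M (E T2)"
    if "T1 \<in> \<T>" "T2 \<in> \<T>" "T1 \<noteq> T2" for T1 T2
  proof -
    have d: "T1 \<inter> T2 = {}" using TT(2) that by auto
    have sub: "T1 \<subseteq> B" "T2 \<subseteq> B" unfolding B_def using that by auto
    have f: "finite T1" "finite T2" using sub finB finite_subset by blast+
    have "E T1 \<inter> E T2 = {\<alpha>. \<forall>v\<in>T1 \<union> T2. \<alpha> v \<in> {h v}}" unfolding E_def by auto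
    hence "measure_pmf.prob ?M (E T1 \<inter> E T2) = (\<Prod>v\<in>T1 \<union> T2. measure_pmf.prob (r v) {h v})"
      using prob_Pi_rect_sub[OF finB, of "T1 \<union> T2" dflt r "\<lambda>v. {h v}"] sub by simp
    also have "\<dots> = (\<Prod>v\<in>T1. pmf (r v) (h v)) * (\<Prod>v\<in>T2. pmf (r v) (h v))"
      using d f by (simp add: prod.union_disjoint measure_pmf_single)
    finally show ?thesis using pE that by simp
  qed
  have "\<mu>0 \<le> (\<Sum>T\<in>\<T>. measure_pmf.prob ?M (E T))"
  proof -
    have "(\<Sum>T\<in>\<T>. \<tau> ^ (2*k)) \<le> (\<Sum>T\<in>\<T>. measure_pmf.prob ?M (E T))" using lbE by (intro sum_mono) auto
    thus ?thesis using mu0(1) TT(4) by simp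
  qed
  from gl_exists[OF finTT negc this mu0(2)]
  have "measure_pmf.prob ?M {x. \<exists>T\<in>\<T>. x \<in> E T} \<ge> 1 - 4 / \<mu>0" by blast
  thus ?thesis unfolding E_def B_def by simp
qed

lemma heavy_LS:
  assumes "good_piece h k T" "T \<subseteq> B" "\<forall>v\<in>T. \<alpha> v = h v" "\<forall>v\<in>T. h v \<in> {..<n}-{d}"
  shows "LS n d B k \<alpha>"
proof (cases "h ` T \<subseteq> T")
  case True
  have "T \<noteq> {}" using assms(1) unfolding good_piece_def by auto
  moreover have "\<forall>v\<in>T. \<alpha> v \<in> T" using True assms(3) by auto
  ultimately show ?thesis unfolding LS_def using assms(2) by blast
next
  case False
  from assms(1) obtain r where r: "r \<notin> T" "h ` T \<subseteq> insert r T" and kc: "k \<le> card T"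
    using False unfolding good_piece_def by auto
  from False obtain v where v: "v \<in> T" "h v \<notin> T" by auto
  hence "h v = r" using r by auto
  hence rU: "r \<in> {..<n}-{d}" using assms(4) v by auto
  have "\<forall>v\<in>T. \<alpha> v \<in> insert r T" using r assms(3) by auto
  thus ?thesis unfolding LS_def using assms(2) rU r kc by blast
qed


lemma core:
  fixes r :: "nat \<Rightarrow> nat pmf" and U :: "nat set"
  assumes U: "U = {..<n} - {d}" and supp: "\<forall>v\<in>U. set_pmf (r v) \<subseteq> U"
    and k1: "1 \<le> k" and tau: "0 < \<tau>" "\<tau> \<le> 1"
    and th: "0 \<le> \<theta> - real (k+1) * \<tau>" "\<theta> \<le> 1"
    and g0: "0 < g0"
    and LB1: "LB1 = (\<theta> - real (k+1) * \<tau>) ^ k / fact k * (1 - \<theta>)" "2 \<le> g0 * LB1" "4 / (g0 * LB1) \<le> eps"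
    and mu1: "\<mu>1 = (real m - real (card U) * \<theta>) / g0" "2 * real k \<le> \<mu>1" "4 / \<mu>1 \<le> eps"
    and mu2: "\<mu>2 = real R * \<tau> ^ (2*k)" "2 \<le> \<mu>2" "4 / \<mu>2 \<le> eps"
    and cntU: "(2*k - 1) * R + (k - 1) * (m + R) + R + m \<le> card U"
    and bud: "m \<le> bud" "2 * k * R \<le> bud"
  shows "\<exists>B\<subseteq>U. card B \<le> bud \<and> measure_pmf.prob (Pi_pmf B dflt r) {\<alpha>. LS n d B k \<alpha>} \<ge> 1 - eps"
proof -
  have finU: "finite U" unfolding U by auto
  define S where "S = {v\<in>U. \<forall>w. pmf (r v) w \<le> \<tau>}"
  have SU: "S \<subseteq> U" unfolding S_def by auto
  have finS: "finite S" using SU finU by (rule finite_subset)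
  have th0: "0 \<le> \<theta>"
  proof -
    have "0 \<le> real (k+1) * \<tau>" using tau by simp
    thus ?thesis using th by linarith
  qed
  show ?thesis
  proof (cases "m \<le> card S")
    case True
    obtain P where P: "P \<subseteq> S" "card P = m" using obtain_subset_with_card_n[OF True] by blast
    have PU: "P \<subseteq> U" using P SU by auto
    have finP: "finite P" using P finS finite_subset by blast
    have spread: "\<forall>a\<in>P. \<forall>w. pmf (r a) w \<le> \<tau>" using P unfolding S_def by auto
    define \<sigma> where "\<sigma> = (\<lambda>w. \<Sum>a\<in>P. pmf (r a) w)"
    define G where "G = {w\<in>U. \<theta> \<le> \<sigma> w}"
    have GU: "G \<subseteq> U" unfolding G_def by auto
    have finG: "finite G" using GU finU by (rule finite_subset)
    have LSsub: "{\<alpha>. k \<le> cnt P w \<alpha>} \<subseteq> {\<alpha>. LS n d P k \<alpha>}" if "w \<in> U" for w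
      using that unfolding LS_def U by auto
    show ?thesis
    proof (cases "g0 \<le> real (card G)")
      case True
      have LBpos: "0 < LB1"
      proof (rule ccontr)
        assume "\<not> 0 < LB1"
        hence "g0 * LB1 \<le> 0" using g0 by (simp add: mult_nonneg_nonpos not_less)
        thus False using LB1(2) by simp
      qed
      define \<mu>0 where "\<mu>0 = real (card G) * ((\<theta> - real (k+1) * \<tau>) ^ k / fact k * (1 - \<theta>))"
      have mu0: "g0 * LB1 \<le> \<mu>0" unfolding \<mu>0_def LB1(1)[symmetric] using True LBpos by (intro mult_right_mono) auto
      have "measure_pmf.prob (Pi_pmf P dflt r) {\<alpha>. \<exists>w\<in>G. k \<le> cnt P w \<alpha>} \<ge> 1 - 4 / \<mu>0"
        by (rule spread_many[OF finP spread _ th finG _ \<mu>0_def]) (use tau G_def \<sigma>_def mu0 LB1 in auto)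
      moreover have "4 / \<mu>0 \<le> 4 / (g0 * LB1)" using mu0 LB1(2) by (intro divide_left_mono) auto
      moreover have "{\<alpha>. \<exists>w\<in>G. k \<le> cnt P w \<alpha>} \<subseteq> {\<alpha>. LS n d P k \<alpha>}" using LSsub GU by blast
      hence "measure_pmf.prob (Pi_pmf P dflt r) {\<alpha>. \<exists>w\<in>G. k \<le> cnt P w \<alpha>} \<le> measure_pmf.prob (Pi_pmf P dflt r) {\<alpha>. LS n d P k \<alpha>}"
        by (rule measure_pmf.finite_measure_mono) auto
      ultimately show ?thesis using PU P bud LB1 by (intro exI[of _ P]) auto
    next
      case False
      have tot: "(\<Sum>w\<in>U. \<sigma> w) = real m"
      proof -
        have "(\<Sum>w\<in>U. \<sigma> w) = (\<Sum>a\<in>P. \<Sum>w\<in>U. pmf (r a) w)" unfolding \<sigma>_def by (rule sum.swap)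
        also have "\<dots> = (\<Sum>a\<in>P. 1)" using supp PU finU by (intro sum.cong refl sum_pmf_eq_1) auto
        finally show ?thesis using P by simp
      qed
      have outside: "(\<Sum>w\<in>U - G. \<sigma> w) \<le> real (card U) * \<theta>"
      proof -
        have "(\<Sum>w\<in>U - G. \<sigma> w) \<le> (\<Sum>w\<in>U - G. \<theta>)" unfolding G_def by (intro sum_mono) auto
        also have "\<dots> = real (card (U - G)) * \<theta>" by simp
        also have "\<dots> \<le> real (card U) * \<theta>" using th0 finU by (intro mult_right_mono) (auto intro: card_mono)
        finally show ?thesis .
      qed
      have inside: "(\<Sum>w\<in>G. \<sigma> w) \<ge> real m - real (card U) * \<theta>"
      proof -
        have "(\<Sum>w\<in>U. \<sigma> w) = (\<Sum>w\<in>G. \<sigma> w) + (\<Sum>w\<in>U - G. \<sigma> w)"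
          using sum.subset_diff[OF GU finU, of \<sigma>] by simp
        thus ?thesis using tot outside by linarith
      qed
      have "\<exists>w\<in>G. \<mu>1 \<le> \<sigma> w"
      proof (rule ccontr)
        assume "\<not> (\<exists>w\<in>G. \<mu>1 \<le> \<sigma> w)"
        hence lt: "\<forall>w\<in>G. \<sigma> w < \<mu>1" by auto
        have "0 < \<mu>1" using mu1 k1 by simp
        hence mpos: "0 < real m - real (card U) * \<theta>" using mu1(1) g0 by (simp add: zero_less_divide_iff)
        show False
        proof (cases "G = {}")
          case True thus False using inside mpos by simp
        next
          case False
          have "(\<Sum>w\<in>G. \<sigma> w) < (\<Sum>w\<in>G. \<mu>1)" using lt finG False by (intro sum_strict_mono) auto
          also have "\<dots> = real (card G) * \<mu>1" by simp
          also have "\<dots> \<le> g0 * \<mu>1" using \<open>\<not> g0 \<le> real (card G)\<close> mu1 k1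
            by (intro mult_right_mono) auto
          also have "\<dots> = real m - real (card U) * \<theta>" unfolding mu1(1) using g0 by simp
          finally show False using inside by simp
        qed
      qed
      then obtain w where w: "w \<in> G" "\<mu>1 \<le> \<sigma> w" by auto
      have mu1pos: "0 < \<mu>1" using mu1 k1 by simp
      have "measure_pmf.prob (Pi_pmf P dflt r) {\<alpha>. k \<le> cnt P w \<alpha>} \<ge> 1 - 4 / \<mu>1"
        by (rule spread_one[OF finP]) (use w \<sigma>_def mu1 mu1pos in auto)
      moreover have "measure_pmf.prob (Pi_pmf P dflt r) {\<alpha>. k \<le> cnt P w \<alpha>} \<le> measure_pmf.prob (Pi_pmf P dflt r) {\<alpha>. LS n d P k \<alpha>}"
        using LSsub[of w] w GU by (intro measure_pmf.finite_measure_mono) auto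
      ultimately show ?thesis using PU P bud mu1 by (intro exI[of _ P]) auto
    qed
  next
    case False
    define H where "H = U - S"
    have finH: "finite H" unfolding H_def using finU by auto
    have exh: "\<exists>w. \<tau> < pmf (r v) w" if "v \<in> H" for v using that unfolding H_def S_def by (auto simp: not_le)
    define h where "h = (\<lambda>v. SOME w. \<tau> < pmf (r v) w)"
    have hp: "\<tau> < pmf (r v) (h v)" if "v \<in> H" for v unfolding h_def using exh[OF that] by (rule someI_ex)
    have hU: "h v \<in> U" if "v \<in> H" for v
    proof -
      have "0 < pmf (r v) (h v)" using hp[OF that] tau by simp
      hence "h v \<in> set_pmf (r v)" by (simp add: set_pmf_eq)
      thus ?thesis using supp that unfolding H_def by auto
    qed
    have exS: "h ` H - H \<subseteq> S" using hU unfolding H_def by auto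
    have cex: "card (h ` H - H) \<le> m" using card_mono[OF finS exS] False by simp
    have cH: "card H + card S = card U" unfolding H_def using card_Diff_subset[OF finS SU] card_mono[OF finU SU] by simp
    have big: "(2*k - 1) * R + (k - 1) * (card (h ` H - H) + R) + R < card H"
    proof -
      have "(k - 1) * (card (h ` H - H) + R) \<le> (k - 1) * (m + R)" using cex by simp
      thus ?thesis using cntU cH False by linarith
    qed
    from heavy_pieces[OF finH k1 big] obtain \<T> where TT: "\<T> \<subseteq> Pow H"
      "\<forall>T1\<in>\<T>. \<forall>T2\<in>\<T>. T1 \<noteq> T2 \<longrightarrow> T1 \<inter> T2 = {}" "\<forall>T\<in>\<T>. good_piece h k T" "card \<T> = R" by blast
    define B where "B = \<Union>\<T>"
    have BU: "B \<subseteq> U" unfolding B_def using TT(1) unfolding H_def by auto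
    have finTT: "finite \<T>" by (rule finite_subset[OF TT(1)]) (simp add: finH)
    have cB: "card B \<le> bud"
    proof -
      have "card B \<le> (\<Sum>T\<in>\<T>. card T)" unfolding B_def by (rule card_Union_le_sum_card)
      also have "\<dots> \<le> (\<Sum>T\<in>\<T>. 2 * k)" using TT(3) unfolding good_piece_def by (intro sum_mono) auto
      also have "\<dots> = 2 * k * R" using TT(4) by simp
      finally show ?thesis using bud by simp
    qed
    have "measure_pmf.prob (Pi_pmf (\<Union>\<T>) dflt r) {\<alpha>. \<exists>T\<in>\<T>. \<forall>v\<in>T. \<alpha> v = h v} \<ge> 1 - 4 / \<mu>2"
      by (rule heavy_case[OF finH _ _ tau(2) TT mu2(1,2)]) (use hp tau in \<open>auto intro: less_imp_le\<close>)
    moreover have "{\<alpha>. \<exists>T\<in>\<T>. \<forall>v\<in>T. \<alpha> v = h v} \<subseteq> {\<alpha>. LS n d B k \<alpha>}"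
    proof
      fix \<alpha> assume "\<alpha> \<in> {\<alpha>. \<exists>T\<in>\<T>. \<forall>v\<in>T. \<alpha> v = h v}"
      then obtain T where T: "T \<in> \<T>" "\<forall>v\<in>T. \<alpha> v = h v" by auto
      have TH: "T \<subseteq> H" using T TT(1) by auto
      have g: "good_piece h k T" using TT(3) T(1) by auto
      have TB: "T \<subseteq> B" unfolding B_def using T(1) by auto
      have "\<forall>v\<in>T. h v \<in> U" using hU TH by auto
      hence hU': "\<forall>v\<in>T. h v \<in> {..<n}-{d}" unfolding U .
      have "LS n d B k \<alpha>" by (rule heavy_LS[OF g TB T(2) hU'])
      thus "\<alpha> \<in> {\<alpha>. LS n d B k \<alpha>}" by simp
    qed
    hence "measure_pmf.prob (Pi_pmf B dflt r) {\<alpha>. \<exists>T\<in>\<T>. \<forall>v\<in>T. \<alpha> v = h v} \<le> measure_pmf.prob (Pi_pmf B dflt r) {\<alpha>. LS n d B k \<alpha>}"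
      by (rule measure_pmf.finite_measure_mono) auto
    ultimately show ?thesis using BU cB mu2 unfolding B_def by (intro exI[of _ "\<Union>\<T>"]) auto
  qed
qed


definition LL :: "real \<Rightarrow> real" where "LL x = 1/10 * (ln x / ln (ln x))"

lemma asym_real:
  "eventually (\<lambda>x::real.
     4 * x powr (1/20) \<le> sqrt x * (1/(16*ln x*(LL x+1))) powr (LL x+1) / 2 \<and>
     2*(LL x+1) \<le> (x/ln x - 1 - x/(8*ln x))/sqrt x \<and>
     4 * x powr (1/20) \<le> (x/ln x - 1 - x/(8*ln x))/sqrt x \<and>
     4 * x powr (1/20) \<le> (x powr (7/10) - 1) * (1/(16*ln x*(LL x+2))) powr (2*(LL x+1)) \<and>
     2*(LL x+1) * x powr (7/10) + (LL x+1)*(x/ln x + x powr (7/10)) + x powr (7/10) + x / ln x \<le> x - 1 \<and>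
     2*(LL x+1) * x powr (7/10) \<le> x / ln x - 1 \<and>
     1 \<le> ln x \<and> 2 \<le> x \<and> 0 \<le> ln (ln x) \<and> 1 \<le> x powr (7/10)) at_top"
proof -
  have 1: "eventually (\<lambda>x::real. 4 * x powr (1/20) \<le> sqrt x * (1/(16*ln x*(1/10*(ln x/ln(ln x))+1))) powr (1/10*(ln x/ln(ln x))+1) / 2) at_top"
    by real_asymp
  have 2: "eventually (\<lambda>x::real. 2*(1/10*(ln x/ln(ln x))+1) \<le> (x/ln x - 1 - x/(8*ln x))/sqrt x) at_top"
    by real_asymp
  have 3: "eventually (\<lambda>x::real. 4 * x powr (1/20) \<le> (x/ln x - 1 - x/(8*ln x))/sqrt x) at_top"
    by real_asymp
  have 4: "eventually (\<lambda>x::real. 4 * x powr (1/20) \<le> (x powr (7/10) - 1) * (1/(16*ln x*(1/10*(ln x/ln(ln x))+2))) powr (2*(1/10*(ln x/ln(ln x))+1))) at_top"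
    by real_asymp
  have 5: "eventually (\<lambda>x::real. 2*(1/10*(ln x/ln(ln x))+1) * x powr (7/10) + (1/10*(ln x/ln(ln x))+1)*(x/ln x + x powr (7/10)) + x powr (7/10) + x / ln x \<le> x - 1) at_top"
    by real_asymp
  have 6: "eventually (\<lambda>x::real. 2*(1/10*(ln x/ln(ln x))+1) * x powr (7/10) \<le> x / ln x - 1) at_top"
    by real_asymp
  have 7: "eventually (\<lambda>x::real. 1 \<le> ln x) at_top" by real_asymp
  have 8: "eventually (\<lambda>x::real. 2 \<le> x) at_top" by real_asymp
  have 9: "eventually (\<lambda>x::real. 0 \<le> ln (ln x)) at_top" by real_asymp
  have 10: "eventually (\<lambda>x::real. 1 \<le> x powr (7/10)) at_top" by real_asymp
  show ?thesis unfolding LL_def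
    using 1 2 3 4 5 6 7 8 9 10 by eventually_elim blast
qed

lemma asym_nat:
  "\<exists>N0. \<forall>n\<ge>N0. (let x = real n in
     4 * x powr (1/20) \<le> sqrt x * (1/(16*ln x*(LL x+1))) powr (LL x+1) / 2 \<and>
     2*(LL x+1) \<le> (x/ln x - 1 - x/(8*ln x))/sqrt x \<and>
     4 * x powr (1/20) \<le> (x/ln x - 1 - x/(8*ln x))/sqrt x \<and>
     4 * x powr (1/20) \<le> (x powr (7/10) - 1) * (1/(16*ln x*(LL x+2))) powr (2*(LL x+1)) \<and>
     2*(LL x+1) * x powr (7/10) + (LL x+1)*(x/ln x + x powr (7/10)) + x powr (7/10) + x / ln x \<le> x - 1 \<and>
     2*(LL x+1) * x powr (7/10) \<le> x / ln x - 1 \<and>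
     1 \<le> ln x \<and> 2 \<le> x \<and> 0 \<le> ln (ln x) \<and> 1 \<le> x powr (7/10))"
proof -
  have "eventually (\<lambda>n. (let x = real n in
     4 * x powr (1/20) \<le> sqrt x * (1/(16*ln x*(LL x+1))) powr (LL x+1) / 2 \<and>
     2*(LL x+1) \<le> (x/ln x - 1 - x/(8*ln x))/sqrt x \<and>
     4 * x powr (1/20) \<le> (x/ln x - 1 - x/(8*ln x))/sqrt x \<and>
     4 * x powr (1/20) \<le> (x powr (7/10) - 1) * (1/(16*ln x*(LL x+2))) powr (2*(LL x+1)) \<and>
     2*(LL x+1) * x powr (7/10) + (LL x+1)*(x/ln x + x powr (7/10)) + x powr (7/10) + x / ln x \<le> x - 1 \<and>
     2*(LL x+1) * x powr (7/10) \<le> x / ln x - 1 \<and>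
     1 \<le> ln x \<and> 2 \<le> x \<and> 0 \<le> ln (ln x) \<and> 1 \<le> x powr (7/10))) sequentially"
    unfolding Let_def by (rule eventually_compose_filterlim[OF asym_real filterlim_real_sequentially])
  thus ?thesis unfolding eventually_sequentially by blast
qed


lemma nbrs_lt:
  assumes "undirected_graph n E" shows "nbrs E v \<subseteq> {..<n}"
proof
  fix w assume "w \<in> nbrs E v"
  hence "{v, w} \<in> E" unfolding nbrs_def by simp
  then obtain a b where ab: "{v, w} = {a, b}" "a < n" "b < n" using assms unfolding undirected_graph_def by blast
  have "w \<in> {v, w}" by simp
  hence "w \<in> {a, b}" using ab(1) by simp
  thus "w \<in> {..<n}" using ab by auto
qed

lemma failed_at_F:
  assumes "B \<subseteq> {..<n} - {d}" "v \<noteq> d"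
  shows "failed_at ((\<lambda>v. {v, d}) ` {v\<in>B. {v, d} \<in> E}) v = (if v \<in> B \<and> {v, d} \<in> E then {d} else {})"
proof -
  have "{w. {v, w} \<in> (\<lambda>v. {v, d}) ` {v\<in>B. {v, d} \<in> E}} = (if v \<in> B \<and> {v, d} \<in> E then {d} else {})"
  proof (rule set_eqI)
    fix w
    have "{v, w} \<in> (\<lambda>v. {v, d}) ` {v\<in>B. {v, d} \<in> E} \<longleftrightarrow> (\<exists>u\<in>B. {u, d} \<in> E \<and> {v, w} = {u, d})" by auto
    also have "\<dots> \<longleftrightarrow> (v \<in> B \<and> {v, d} \<in> E \<and> w = d)"
    proof
      assume "\<exists>u\<in>B. {u, d} \<in> E \<and> {v, w} = {u, d}"
      then obtain u where u: "u \<in> B" "{u, d} \<in> E" "{v, w} = {u, d}" by auto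
      have "u \<noteq> d" using u assms by auto
      have "v \<in> {u, d}" using u(3) by (metis insertI1)
      hence vu: "v = u" using assms(2) by simp
      have "d \<in> {v, w}" using u(3) by simp
      hence "w = d" using assms(2) by simp
      hence "v = u \<and> w = d" using vu by simp
      thus "v \<in> B \<and> {v, d} \<in> E \<and> w = d" using u by auto
    qed auto
    finally show "w \<in> {w. {v, w} \<in> (\<lambda>v. {v, d}) ` {v\<in>B. {v, d} \<in> E}} \<longleftrightarrow> w \<in> (if v \<in> B \<and> {v, d} \<in> E then {d} else {})"
      by auto
  qed
  thus ?thesis unfolding failed_at_def .
qed

lemma supp_r:
  assumes G: "undirected_graph n E" and P: "failover_protocol n E D" and d: "d < n" and v: "v \<in> {..<n} - {d}"
  shows "set_pmf (if {v, d} \<in> E then D v {d} d else D v {} d) \<subseteq> {..<n} - {d}"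
proof (cases "{v, d} \<in> E")
  case True
  have "{d} \<subseteq> nbrs E v" using True unfolding nbrs_def by simp
  hence "set_pmf (D v {d} d) \<subseteq> (nbrs E v - {d}) \<union> {v}" using P v d unfolding failover_protocol_def by auto
  thus ?thesis using True nbrs_lt[OF G, of v] v by auto
next
  case False
  have "set_pmf (D v {} d) \<subseteq> (nbrs E v - {}) \<union> {v}" using P v d unfolding failover_protocol_def by auto
  moreover have "d \<notin> nbrs E v" using False unfolding nbrs_def by simp
  ultimately show ?thesis using False nbrs_lt[OF G, of v] v by auto
qed

lemma transfer:
  assumes G: "undirected_graph n E" and P: "failover_protocol n E D" and d: "d < n"
    and B: "B \<subseteq> {..<n} - {d}" and Lk: "L < real k"
  shows "measure_pmf.prob (routing_entries n D ((\<lambda>v. {v, d}) ` {v\<in>B. {v, d} \<in> E}) d)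
            {\<alpha>. \<exists>v\<in>{..<n} - {d}. ereal L < load n \<alpha> d v}
         \<ge> measure_pmf.prob (Pi_pmf B d (\<lambda>v. if {v, d} \<in> E then D v {d} d else D v {} d)) {\<alpha>. LS n d B k \<alpha>}"
proof -
  define F where "F = (\<lambda>v. {v, d}) ` {v\<in>B. {v, d} \<in> E}"
  define p where "p = (\<lambda>v. D v (failed_at F v) d)"
  define r where "r = (\<lambda>v. if {v, d} \<in> E then D v {d} d else D v {} d)"
  define M where "M = routing_entries n D F d"
  have M: "M = Pi_pmf {..<n} d p" unfolding M_def routing_entries_def p_def by simp
  have finB: "finite B" using B by (rule finite_subset) auto
  have FE: "F \<subseteq> E" unfolding F_def by auto
  have fsub: "failed_at F v \<subseteq> nbrs E v" for v using FE unfolding failed_at_def nbrs_def by auto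
  have pr: "p v = r v" if "v \<in> B" for v
  proof -
    have "v \<noteq> d" using that B by auto
    hence "failed_at F v = (if v \<in> B \<and> {v, d} \<in> E then {d} else {})"
      unfolding F_def by (rule failed_at_F[OF B])
    thus ?thesis using that unfolding p_def r_def by simp
  qed
  have X: "measure_pmf.prob M {\<alpha>. LS n d B k \<alpha>} = measure_pmf.prob (Pi_pmf B d r) {\<alpha>. LS n d B k \<alpha>}"
  proof -
    have "measure_pmf.prob M {\<alpha>. LS n d B k \<alpha>} = measure_pmf.prob (Pi_pmf B d p) {\<alpha>. LS n d B k \<alpha>}"
      unfolding M by (rule prob_Pi_restrict) (use B LS_local in auto)
    also have "Pi_pmf B d p = Pi_pmf B d r" using pr by (intro Pi_pmf_cong) auto
    finally show ?thesis .
  qed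
  have suppM: "\<forall>v<n. \<alpha> v < n" if "\<alpha> \<in> set_pmf M" for \<alpha>
  proof (intro allI impI)
    fix v assume v: "v < n"
    have "\<alpha> v \<in> set_pmf (p v)" using that v unfolding M set_Pi_pmf[OF finite_lessThan] PiE_dflt_def by auto
    moreover have "set_pmf (p v) \<subseteq> {..<n}"
    proof -
      have "set_pmf (p v) \<subseteq> (nbrs E v - failed_at F v) \<union> {v}" using P v d fsub unfolding failover_protocol_def p_def by auto
      thus ?thesis using nbrs_lt[OF G, of v] v by auto
    qed
    ultimately show "\<alpha> v < n" by auto
  qed
  have sub: "{\<alpha>. LS n d B k \<alpha>} \<inter> set_pmf M \<subseteq> {\<alpha>. \<exists>v\<in>{..<n} - {d}. ereal L < load n \<alpha> d v}"
  proof
    fix \<alpha> assume a: "\<alpha> \<in> {\<alpha>. LS n d B k \<alpha>} \<inter> set_pmf M"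
    from LS_load[OF B finB suppM] a obtain v where v: "v \<in> {..<n} - {d}" "ereal (real k) \<le> load n \<alpha> d v" by auto
    have "ereal L < ereal (real k)" using Lk by simp
    hence "ereal L < load n \<alpha> d v" using v(2) by (rule less_le_trans)
    thus "\<alpha> \<in> {\<alpha>. \<exists>v\<in>{..<n} - {d}. ereal L < load n \<alpha> d v}" using v(1) by blast
  qed
  have "measure_pmf.prob M {\<alpha>. LS n d B k \<alpha>} = measure_pmf.prob M ({\<alpha>. LS n d B k \<alpha>} \<inter> set_pmf M)"
    by (simp add: measure_Int_set_pmf)
  also have "\<dots> \<le> measure_pmf.prob M {\<alpha>. \<exists>v\<in>{..<n} - {d}. ereal L < load n \<alpha> d v}"
    by (rule measure_pmf.finite_measure_mono[OF sub]) auto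
  finally show ?thesis using X unfolding M_def F_def r_def by simp
qed


theorem mainTheorem1:
  "\<exists>C>0. \<exists>c>0. \<exists>N0. \<forall>n\<ge>N0. \<forall>E d D.
     undirected_graph n E \<longrightarrow> d < n \<longrightarrow> failover_protocol n E D \<longrightarrow>
     (\<exists>F. F \<subseteq> {e \<in> E. d \<in> e} \<and> real (card F) \<le> C * real n / ln (real n) \<and>
          measure_pmf.prob (routing_entries n D F d)
            {\<alpha>. \<exists>v\<in>{..<n} - {d}. ereal (1/10 * (ln (real n) / ln (ln (real n)))) < load n \<alpha> d v}
          \<ge> 1 - real n powr (- c))"
proof -
  obtain N0 where N0: "\<forall>n\<ge>N0. (let x = real n in
     4 * x powr (1/20) \<le> sqrt x * (1/(16*ln x*(LL x+1))) powr (LL x+1) / 2 \<and>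
     2*(LL x+1) \<le> (x/ln x - 1 - x/(8*ln x))/sqrt x \<and>
     4 * x powr (1/20) \<le> (x/ln x - 1 - x/(8*ln x))/sqrt x \<and>
     4 * x powr (1/20) \<le> (x powr (7/10) - 1) * (1/(16*ln x*(LL x+2))) powr (2*(LL x+1)) \<and>
     2*(LL x+1) * x powr (7/10) + (LL x+1)*(x/ln x + x powr (7/10)) + x powr (7/10) + x / ln x \<le> x - 1 \<and>
     2*(LL x+1) * x powr (7/10) \<le> x / ln x - 1 \<and>
     1 \<le> ln x \<and> 2 \<le> x \<and> 0 \<le> ln (ln x) \<and> 1 \<le> x powr (7/10))"
    using asym_nat by blast
  have main: "\<exists>F. F \<subseteq> {e \<in> E. d \<in> e} \<and> real (card F) \<le> 1 * real n / ln (real n) \<and>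
          measure_pmf.prob (routing_entries n D F d)
            {\<alpha>. \<exists>v\<in>{..<n} - {d}. ereal (1/10 * (ln (real n) / ln (ln (real n)))) < load n \<alpha> d v}
          \<ge> 1 - real n powr (- (1/20))"
    if n: "n \<ge> N0" and G: "undirected_graph n E" and d: "d < n" and P: "failover_protocol n E D" for n E d D
  proof -
    define x where "x = real n"
    define lx where "lx = ln x"
    define Lr where "Lr = LL x"
    have facts: "4 * x powr (1/20) \<le> sqrt x * (1/(16*lx*(Lr+1))) powr (Lr+1) / 2"
      "2*(Lr+1) \<le> (x/lx - 1 - x/(8*lx))/sqrt x"
      "4 * x powr (1/20) \<le> (x/lx - 1 - x/(8*lx))/sqrt x"
      "4 * x powr (1/20) \<le> (x powr (7/10) - 1) * (1/(16*lx*(Lr+2))) powr (2*(Lr+1))"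
      "2*(Lr+1) * x powr (7/10) + (Lr+1)*(x/lx + x powr (7/10)) + x powr (7/10) + x / lx \<le> x - 1"
      "2*(Lr+1) * x powr (7/10) \<le> x / lx - 1"
      "1 \<le> lx" "2 \<le> x" "0 \<le> ln lx" "1 \<le> x powr (7/10)"
      using N0[rule_format, OF n] unfolding Let_def x_def[symmetric] lx_def[symmetric] Lr_def[symmetric] by auto
    have Lr0: "0 \<le> Lr" unfolding Lr_def LL_def lx_def[symmetric] using facts(7,9) by simp
    define k where "k = nat \<lfloor>Lr\<rfloor> + 1"
    have rk: "real k = of_int \<lfloor>Lr\<rfloor> + 1" unfolding k_def using Lr0 by simp
    have kL: "Lr < real k" "real k \<le> Lr + 1" using rk by linarith+
    have k1: "1 \<le> k" unfolding k_def by simp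
    define \<theta> where "\<theta> = 1 / (8 * lx)"
    have th: "0 < \<theta>" "\<theta> \<le> 1/8" unfolding \<theta>_def using facts(7) by auto
    define \<tau> where "\<tau> = \<theta> / (2 * real (k+1))"
    have tau: "0 < \<tau>" "\<tau> \<le> 1" unfolding \<tau>_def using th by (auto simp: field_simps)
    have thtau: "\<theta> - real (k+1) * \<tau> = \<theta> / 2" unfolding \<tau>_def by (simp add: field_simps)
    define m where "m = nat \<lfloor>x / lx\<rfloor>"
    have xl0: "0 \<le> x / lx" using facts(7,8) by simp
    have rm: "real m \<le> x / lx" "x / lx - 1 \<le> real m" unfolding m_def using xl0 by linarith+
    define R where "R = nat \<lfloor>x powr (7/10)\<rfloor>"
    have rR: "real R \<le> x powr (7/10)" "x powr (7/10) - 1 \<le> real R" unfolding R_def using facts(10) by linarith+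
    define g0 where "g0 = sqrt x"
    have g0: "0 < g0" unfolding g0_def using facts(8) by simp
    define eps where "eps = x powr (- (1/20))"
    have x20: "1 \<le> x powr (1/20)" using facts(8) by (intro ge_one_powr_ge_zero) auto
    have eps: "eps = 1 / x powr (1/20)" unfolding eps_def using facts(8) by (simp add: powr_minus_divide)
    have epsb: "4 / y \<le> eps" if "4 * x powr (1/20) \<le> y" for y
    proof -
      have y0: "0 < 4 * x powr (1/20)" using x20 by linarith
      hence "0 < y" using that by linarith
      hence "0 < (4 * x powr (1/20)) * y" using y0 by simp
      hence "4 / y \<le> 4 / (4 * x powr (1/20))" using that by (intro divide_left_mono) auto
      thus ?thesis unfolding eps by simp
    qed
    define U where "U = {..<n} - {d}"
    have cU: "card U = n - 1" unfolding U_def using d by simp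
    have cUr: "real (card U) = x - 1" unfolding cU x_def using d by (simp add: of_nat_diff)
    define r where "r = (\<lambda>v. if {v, d} \<in> E then D v {d} d else D v {} d)"
    have supp: "\<forall>v\<in>U. set_pmf (r v) \<subseteq> U" unfolding r_def U_def using supp_r[OF G P d] by blast
    define LB1 where "LB1 = (\<theta> - real (k+1) * \<tau>) ^ k / fact k * (1 - \<theta>)"
    define b where "b = 1/(16*lx*(Lr+1))"
    have bp: "1 \<le> 16*lx*(Lr+1)"
    proof -
      have "1*1 \<le> (16*lx)*(Lr+1)" using facts(7) Lr0 by (intro mult_mono) auto
      thus ?thesis by simp
    qed
    have b: "0 < b" "b \<le> 1" unfolding b_def using bp by auto
    have LB1b: "b powr (Lr+1) / 2 \<le> LB1"
    proof -
      have "(fact k :: real) \<le> real k ^ k" using fact_le_power[of k] by simp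
      hence "(\<theta>/2) ^ k / real k ^ k \<le> (\<theta>/2) ^ k / fact k"
        using th k1 by (intro divide_left_mono) (auto intro!: mult_pos_pos)
      moreover have "(\<theta>/2) ^ k / real k ^ k = (\<theta> / (2 * real k)) ^ k" by (simp add: power_divide power_mult_distrib)
      moreover have "b \<le> \<theta> / (2 * real k)"
      proof -
        have "\<theta> / (2 * real k) = 1 / (16 * lx * real k)" unfolding \<theta>_def by (simp add: field_simps)
        moreover have "16 * lx * real k \<le> 16 * lx * (Lr + 1)" using kL facts(7) by simp
        moreover have "0 < 16 * lx * real k" using facts(7) k1 by simp
        ultimately show ?thesis unfolding b_def by (simp add: frac_le)
      qed
      hence "b ^ k \<le> (\<theta> / (2 * real k)) ^ k" using b by (intro power_mono) auto
      moreover have "b powr (Lr + 1) \<le> b ^ k"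
      proof -
        have "b powr (Lr + 1) \<le> b powr (real k)" using b kL by (intro powr_mono') auto
        thus ?thesis using b by (simp add: powr_realpow)
      qed
      ultimately have A: "b powr (Lr + 1) \<le> (\<theta>/2) ^ k / fact k" by linarith
      have B: "1/2 \<le> 1 - \<theta>" using th by simp
      have "b powr (Lr+1) / 2 = b powr (Lr + 1) * (1/2)" by simp
      also have "\<dots> \<le> (\<theta>/2) ^ k / fact k * (1 - \<theta>)" using A B th by (intro mult_mono) auto
      finally show ?thesis unfolding LB1_def thtau .
    qed
    have gLB: "4 * x powr (1/20) \<le> g0 * LB1"
    proof -
      have "sqrt x * b powr (Lr+1) / 2 \<le> g0 * LB1"
        using LB1b g0 unfolding g0_def by (simp add: mult_left_mono)
      thus ?thesis using facts(1) unfolding b_def by linarith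
    qed
    define \<mu>1 where "\<mu>1 = (real m - real (card U) * \<theta>) / g0"
    have mu1: "(x/lx - 1 - x/(8*lx))/sqrt x \<le> \<mu>1"
    proof -
      have "real (card U) * \<theta> \<le> x * \<theta>" using cUr th by simp
      also have "x * \<theta> = x/(8*lx)" unfolding \<theta>_def by simp
      finally have "x/lx - 1 - x/(8*lx) \<le> real m - real (card U) * \<theta>" using rm by linarith
      thus ?thesis unfolding \<mu>1_def g0_def using facts(8) by (intro divide_right_mono) auto
    qed
    define \<mu>2 where "\<mu>2 = real R * \<tau> ^ (2*k)"
    define b2 where "b2 = 1/(16*lx*(Lr+2))"
    have b2p: "1 \<le> 16*lx*(Lr+2)"
    proof -
      have "1*1 \<le> (16*lx)*(Lr+2)" using facts(7) Lr0 by (intro mult_mono) auto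
      thus ?thesis by simp
    qed
    have b2: "0 < b2" "b2 \<le> 1" unfolding b2_def using b2p by auto
    have mu2: "(x powr (7/10) - 1) * b2 powr (2*(Lr+1)) \<le> \<mu>2"
    proof -
      have "b2 \<le> \<tau>"
      proof -
        have "\<tau> = 1 / (16 * lx * real (k+1))" unfolding \<tau>_def \<theta>_def by (simp add: field_simps)
        moreover have "16 * lx * real (k+1) \<le> 16 * lx * (Lr + 2)" using kL facts(7) by simp
        moreover have "0 < 16 * lx * real (k+1)" using facts(7) by simp
        ultimately show ?thesis unfolding b2_def by (simp add: frac_le)
      qed
      hence "b2 ^ (2*k) \<le> \<tau> ^ (2*k)" using b2 by (intro power_mono) auto
      moreover have "b2 powr (2*(Lr+1)) \<le> b2 ^ (2*k)"
      proof -
        have "b2 powr (2*(Lr + 1)) \<le> b2 powr (real (2*k))" using b2 kL by (intro powr_mono') auto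
        also have "b2 powr (real (2*k)) = b2 ^ (2*k)" using b2 by (intro powr_realpow) auto
        finally show ?thesis .
      qed
      ultimately have "b2 powr (2*(Lr+1)) \<le> \<tau> ^ (2*k)" by linarith
      thus ?thesis unfolding \<mu>2_def using rR facts(10) b2
        by (intro mult_mono) auto
    qed
    have kR: "real k * real R \<le> (Lr+1) * x powr (7/10)"
      by (rule mult_mono[OF kL(2) rR(1)]) (use Lr0 in auto)
    have kmR: "real k * (real m + real R) \<le> (Lr+1) * (x/lx + x powr (7/10))"
      by (rule mult_mono[OF kL(2)]) (use Lr0 rm rR in auto)
    have cntU: "(2*k - 1) * R + (k - 1) * (m + R) + R + m \<le> card U"
    proof -
      have nn: "(2*k - 1) * R + (k - 1) * (m + R) + R + m \<le> 2 * k * R + k * (m + R) + R + m"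
        by (intro add_mono mult_right_mono) auto
      have "real ((2*k - 1) * R + (k - 1) * (m + R) + R + m) \<le> real (2 * k * R + k * (m + R) + R + m)"
        using nn by (simp only: of_nat_le_iff)
      also have "\<dots> = 2 * real k * real R + real k * (real m + real R) + real R + real m" by simp
      finally have "real ((2*k - 1) * R + (k - 1) * (m + R) + R + m) \<le> 2 * real k * real R + real k * (real m + real R) + real R + real m" .
      also have "\<dots> \<le> 2*(Lr+1) * x powr (7/10) + (Lr+1)*(x/lx + x powr (7/10)) + x powr (7/10) + x / lx"
        using kR kmR rm rR by linarith
      also have "\<dots> \<le> real (card U)" using facts(5) cUr by simp
      finally show ?thesis by (simp only: of_nat_le_iff)
    qed
    have bud2: "2 * k * R \<le> m"
    proof -
      have "real (2 * k * R) = 2 * (real k * real R)" by simp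
      also have "\<dots> \<le> 2 * ((Lr + 1) * x powr (7/10))" using kR by linarith
      finally have "real (2 * k * R) \<le> 2 * (Lr + 1) * x powr (7/10)" by (simp only: mult.assoc)
      also have "\<dots> \<le> real m" using facts(6) rm by linarith
      finally show ?thesis by (simp only: of_nat_le_iff)
    qed
    have "\<exists>B\<subseteq>U. card B \<le> m \<and> measure_pmf.prob (Pi_pmf B d r) {\<alpha>. LS n d B k \<alpha>} \<ge> 1 - eps"
    proof (rule core[OF U_def supp k1 tau _ _ g0 LB1_def _ _ \<mu>1_def _ _ \<mu>2_def])
      show "0 \<le> \<theta> - real (k + 1) * \<tau>" "\<theta> \<le> 1" using thtau th by auto
      show "2 \<le> g0 * LB1" using gLB x20 by linarith
      show "4 / (g0 * LB1) \<le> eps" by (rule epsb[OF gLB])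
      have "2 * real k \<le> 2*(Lr+1)" using kL by simp
      also have "\<dots> \<le> (x/lx - 1 - x/(8*lx))/sqrt x" by (rule facts(2))
      also have "\<dots> \<le> \<mu>1" by (rule mu1)
      finally show "2 * real k \<le> \<mu>1" .
      show "4 / \<mu>1 \<le> eps" by (rule epsb[OF order_trans[OF facts(3) mu1]])
      have m2: "4 * x powr (1/20) \<le> \<mu>2" using order_trans[OF facts(4) mu2[unfolded b2_def]] .
      show "2 \<le> \<mu>2" using m2 x20 by linarith
      show "4 / \<mu>2 \<le> eps" by (rule epsb[OF m2])
      show "(2*k - 1) * R + (k - 1) * (m + R) + R + m \<le> card U" by (rule cntU)
      show "m \<le> m" by simp
      show "2 * k * R \<le> m" by (rule bud2)
    qed
    then obtain B where B: "B \<subseteq> U" "card B \<le> m" "measure_pmf.prob (Pi_pmf B d r) {\<alpha>. LS n d B k \<alpha>} \<ge> 1 - eps"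
      by blast
    define F where "F = (\<lambda>v. {v, d}) ` {v\<in>B. {v, d} \<in> E}"
    have finB: "finite B" using B(1) unfolding U_def by (rule finite_subset) auto
    have FE: "F \<subseteq> {e \<in> E. d \<in> e}" unfolding F_def by auto
    have cF: "real (card F) \<le> 1 * real n / ln (real n)"
    proof -
      have "card F \<le> card {v\<in>B. {v, d} \<in> E}" unfolding F_def by (rule card_image_le) (use finB in auto)
      also have "\<dots> \<le> card B" using finB by (intro card_mono) auto
      finally have "real (card F) \<le> real m" using B(2) by linarith
      thus ?thesis using rm unfolding x_def lx_def by simp
    qed
    have "measure_pmf.prob (routing_entries n D F d)
            {\<alpha>. \<exists>v\<in>{..<n} - {d}. ereal Lr < load n \<alpha> d v}
         \<ge> measure_pmf.prob (Pi_pmf B d r) {\<alpha>. LS n d B k \<alpha>}"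
      unfolding F_def r_def by (rule transfer[OF G P d _ kL(1)]) (use B(1) U_def in simp)
    hence "measure_pmf.prob (routing_entries n D F d)
            {\<alpha>. \<exists>v\<in>{..<n} - {d}. ereal Lr < load n \<alpha> d v} \<ge> 1 - eps" using B(3) by linarith
    moreover have "Lr = 1/10 * (ln (real n) / ln (ln (real n)))" unfolding Lr_def LL_def x_def by simp
    ultimately show ?thesis using FE cF unfolding eps_def x_def by (intro exI[of _ F]) auto
  qed
  have all: "\<forall>n\<ge>N0. \<forall>E d D.
     undirected_graph n E \<longrightarrow> d < n \<longrightarrow> failover_protocol n E D \<longrightarrow>
     (\<exists>F. F \<subseteq> {e \<in> E. d \<in> e} \<and> real (card F) \<le> 1 * real n / ln (real n) \<and>
          measure_pmf.prob (routing_entries n D F d)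
            {\<alpha>. \<exists>v\<in>{..<n} - {d}. ereal (1/10 * (ln (real n) / ln (ln (real n)))) < load n \<alpha> d v}
          \<ge> 1 - real n powr (- (1/20)))"
  proof (intro allI impI)
    fix n E d D assume "N0 \<le> n" "undirected_graph n E" "d < n" "failover_protocol n E D"
    thus "\<exists>F. F \<subseteq> {e \<in> E. d \<in> e} \<and> real (card F) \<le> 1 * real n / ln (real n) \<and>
          measure_pmf.prob (routing_entries n D F d)
            {\<alpha>. \<exists>v\<in>{..<n} - {d}. ereal (1/10 * (ln (real n) / ln (ln (real n)))) < load n \<alpha> d v}
          \<ge> 1 - real n powr (- (1/20))" by (rule main)
  qed
  have pos: "(0::real) < 1" "(0::real) < 1/20" by simp_all
  show ?thesis using pos all by blast
qed


end
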